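(* Let $(\mathcal{L},\mathcal{G})$ be a flag built lattice and $F\in\mathcal{L}\setminus\{\hat0,\hat1\}$. Then the restriction $(\mathcal{L}^F,\mathcal{G}^F)$ and the contraction $(\mathcal{L}_F,\mathcal{G}_F)$ are flag built lattices.
   Context: $\mathcal{L}$ is a finite geometric lattice. A building set is $\mathcal{G}\subseteq\mathcal{L}\setminus\{\hat0\}$ such that for every $F\neq\hat0$ the join map $\prod_{G\in\max\mathcal{G}_{\leqslant F}}[\hat0,G]\to[\hat0,F]$ is a poset isomorphism ($\max\mathcal{G}_{\leqslant F}$ = maximal elements of $\{G\in\mathcal{G}:G\leqslant F\}$); $(\mathcal{L},\mathcal{G})$ is a built lattice. $\mathcal{S}\subseteq\mathcal{G}$ is nested if for every antichain $A\subseteq\mathcal{S}$ and every $\{S_1,\dots,S_k\}\subseteq A$, $k\geqslant2$, $S_1\vee\dots\vee S_k\notin\mathcal{G}$. $\mathbf{N}(\mathcal{L},\mathcal{G})$ is the simplicial complex of nested sets contained in $\mathcal{G}\setminus\max\mathcal{G}$; $(\mathcal{L},\mathcal{G})$ is flag if $\mathbf{N}(\mathcal{L},\mathcal{G})$ is a flag complex (all minimal non-faces have size $2$). Restriction: $\mathcal{L}^F=[\hat0,F]$, $\mathcal{G}^F=\mathcal{G}\cap[\hat0,F]$. Contraction: $\mathcal{L}_F=[F,\hat1]$, $\mathcal{G}_F=\{F\vee G:G\in\mathcal{G}\}\setminus\{F\}$ (with $F$ as bottom element of $\mathcal{L}_F$). *)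

theory Defs
  imports Main "HOL-Library.FuncSet"
begin

text \<open>Finite posets/lattices are given by a carrier set L and an order relation le,
so that intervals of a lattice are again lattices on the same element type.\<close>

definition is_lub :: "'a set \<Rightarrow> ('a \<Rightarrow> 'a \<Rightarrow> bool) \<Rightarrow> 'a set \<Rightarrow> 'a \<Rightarrow> bool" where
  "is_lub L le S z \<longleftrightarrow> z \<in> L \<and> (\<forall>s\<in>S. le s z) \<and> (\<forall>w\<in>L. (\<forall>s\<in>S. le s w) \<longrightarrow> le z w)"

definition is_glb :: "'a set \<Rightarrow> ('a \<Rightarrow> 'a \<Rightarrow> bool) \<Rightarrow> 'a set \<Rightarrow> 'a \<Rightarrow> bool" where
  "is_glb L le S z \<longleftrightarrow> z \<in> L \<and> (\<forall>s\<in>S. le z s) \<and> (\<forall>w\<in>L. (\<forall>s\<in>S. le w s) \<longrightarrow> le w z)"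

definition lub :: "'a set \<Rightarrow> ('a \<Rightarrow> 'a \<Rightarrow> bool) \<Rightarrow> 'a set \<Rightarrow> 'a" where
  "lub L le S = (THE z. is_lub L le S z)"

definition glb :: "'a set \<Rightarrow> ('a \<Rightarrow> 'a \<Rightarrow> bool) \<Rightarrow> 'a set \<Rightarrow> 'a" where
  "glb L le S = (THE z. is_glb L le S z)"

definition ljoin :: "'a set \<Rightarrow> ('a \<Rightarrow> 'a \<Rightarrow> bool) \<Rightarrow> 'a \<Rightarrow> 'a \<Rightarrow> 'a" where
  "ljoin L le x y = lub L le {x, y}"

definition lmeet :: "'a set \<Rightarrow> ('a \<Rightarrow> 'a \<Rightarrow> bool) \<Rightarrow> 'a \<Rightarrow> 'a \<Rightarrow> 'a" where
  "lmeet L le x y = glb L le {x, y}"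

definition lbot :: "'a set \<Rightarrow> ('a \<Rightarrow> 'a \<Rightarrow> bool) \<Rightarrow> 'a" where
  "lbot L le = lub L le {}"

definition ltop :: "'a set \<Rightarrow> ('a \<Rightarrow> 'a \<Rightarrow> bool) \<Rightarrow> 'a" where
  "ltop L le = lub L le L"

definition interval :: "'a set \<Rightarrow> ('a \<Rightarrow> 'a \<Rightarrow> bool) \<Rightarrow> 'a \<Rightarrow> 'a \<Rightarrow> 'a set" where
  "interval L le a b = {x \<in> L. le a x \<and> le x b}"

definition partial_order_on' :: "'a set \<Rightarrow> ('a \<Rightarrow> 'a \<Rightarrow> bool) \<Rightarrow> bool" where
  "partial_order_on' L le \<longleftrightarrow>
     (\<forall>x\<in>L. le x x) \<and>
     (\<forall>x\<in>L. \<forall>y\<in>L. le x y \<and> le y x \<longrightarrow> x = y) \<and>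
     (\<forall>x\<in>L. \<forall>y\<in>L. \<forall>z\<in>L. le x y \<and> le y z \<longrightarrow> le x z)"

definition lattice_on :: "'a set \<Rightarrow> ('a \<Rightarrow> 'a \<Rightarrow> bool) \<Rightarrow> bool" where
  "lattice_on L le \<longleftrightarrow> partial_order_on' L le \<and>
     (\<forall>x\<in>L. \<forall>y\<in>L. (\<exists>z. is_lub L le {x, y} z) \<and> (\<exists>z. is_glb L le {x, y} z))"

definition covers :: "'a set \<Rightarrow> ('a \<Rightarrow> 'a \<Rightarrow> bool) \<Rightarrow> 'a \<Rightarrow> 'a \<Rightarrow> bool" where
  "covers L le x y \<longleftrightarrow> x \<in> L \<and> y \<in> L \<and> le x y \<and> x \<noteq> y \<and>
     (\<forall>z\<in>L. le x z \<and> le z y \<longrightarrow> z = x \<or> z = y)"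

definition atoms :: "'a set \<Rightarrow> ('a \<Rightarrow> 'a \<Rightarrow> bool) \<Rightarrow> 'a set" where
  "atoms L le = {a \<in> L. covers L le (lbot L le) a}"

text \<open>Finite geometric lattice: finite, atomistic, (upper) semimodular lattice.\<close>
definition geometric_lattice :: "'a set \<Rightarrow> ('a \<Rightarrow> 'a \<Rightarrow> bool) \<Rightarrow> bool" where
  "geometric_lattice L le \<longleftrightarrow> finite L \<and> L \<noteq> {} \<and> lattice_on L le \<and>
     (\<forall>x\<in>L. x = lub L le {a \<in> atoms L le. le a x}) \<and>
     (\<forall>x\<in>L. \<forall>y\<in>L. covers L le (lmeet L le x y) x \<and> covers L le (lmeet L le x y) y
        \<longrightarrow> covers L le x (ljoin L le x y) \<and> covers L le y (ljoin L le x y))"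

definition maxs :: "('a \<Rightarrow> 'a \<Rightarrow> bool) \<Rightarrow> 'a set \<Rightarrow> 'a set" where
  "maxs le S = {x \<in> S. \<forall>y\<in>S. le x y \<longrightarrow> y = x}"

definition building_set :: "'a set \<Rightarrow> ('a \<Rightarrow> 'a \<Rightarrow> bool) \<Rightarrow> 'a set \<Rightarrow> bool" where
  "building_set L le \<G> \<longleftrightarrow> \<G> \<subseteq> L - {lbot L le} \<and>
     (\<forall>F\<in>L. F \<noteq> lbot L le \<longrightarrow>
       (let M = maxs le {G \<in> \<G>. le G F};
            P = (\<Pi>\<^sub>E G\<in>M. interval L le (lbot L le) G);
            j = (\<lambda>x. lub L le (x ` M))
        in bij_betw j P (interval L le (lbot L le) F) \<and>
           (\<forall>x\<in>P. \<forall>y\<in>P. (\<forall>G\<in>M. le (x G) (y G)) \<longleftrightarrow> le (j x) (j y))))"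

definition built_lattice :: "'a set \<Rightarrow> ('a \<Rightarrow> 'a \<Rightarrow> bool) \<Rightarrow> 'a set \<Rightarrow> bool" where
  "built_lattice L le \<G> \<longleftrightarrow> geometric_lattice L le \<and> building_set L le \<G>"

definition antichain_on :: "('a \<Rightarrow> 'a \<Rightarrow> bool) \<Rightarrow> 'a set \<Rightarrow> bool" where
  "antichain_on le A \<longleftrightarrow> (\<forall>x\<in>A. \<forall>y\<in>A. le x y \<longrightarrow> x = y)"

definition nested :: "'a set \<Rightarrow> ('a \<Rightarrow> 'a \<Rightarrow> bool) \<Rightarrow> 'a set \<Rightarrow> 'a set \<Rightarrow> bool" where
  "nested L le \<G> S \<longleftrightarrow> S \<subseteq> \<G> \<and>
     (\<forall>A \<subseteq> S. antichain_on le A \<longrightarrow>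
        (\<forall>T \<subseteq> A. finite T \<and> card T \<ge> 2 \<longrightarrow> lub L le T \<notin> \<G>))"

definition nested_complex :: "'a set \<Rightarrow> ('a \<Rightarrow> 'a \<Rightarrow> bool) \<Rightarrow> 'a set \<Rightarrow> 'a set set" where
  "nested_complex L le \<G> = {S. S \<subseteq> \<G> - maxs le \<G> \<and> nested L le \<G> S}"

definition flag_built :: "'a set \<Rightarrow> ('a \<Rightarrow> 'a \<Rightarrow> bool) \<Rightarrow> 'a set \<Rightarrow> bool" where
  "flag_built L le \<G> \<longleftrightarrow>
     (\<forall>N. N \<subseteq> \<G> - maxs le \<G> \<and> N \<notin> nested_complex L le \<G> \<and>
          (\<forall>N'. N' \<subset> N \<longrightarrow> N' \<in> nested_complex L le \<G>) \<longrightarrow> card N = 2)"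

definition restr_L :: "'a set \<Rightarrow> ('a \<Rightarrow> 'a \<Rightarrow> bool) \<Rightarrow> 'a \<Rightarrow> 'a set" where
  "restr_L L le F = {x \<in> L. le x F}"

definition restr_G :: "'a set \<Rightarrow> ('a \<Rightarrow> 'a \<Rightarrow> bool) \<Rightarrow> 'a \<Rightarrow> 'a set" where
  "restr_G \<G> le F = {G \<in> \<G>. le G F}"

definition contr_L :: "'a set \<Rightarrow> ('a \<Rightarrow> 'a \<Rightarrow> bool) \<Rightarrow> 'a \<Rightarrow> 'a set" where
  "contr_L L le F = {x \<in> L. le F x}"

definition contr_G :: "'a set \<Rightarrow> ('a \<Rightarrow> 'a \<Rightarrow> bool) \<Rightarrow> 'a set \<Rightarrow> 'a \<Rightarrow> 'a set" where
  "contr_G L le \<G> F = (\<lambda>G. ljoin L le F G) ` \<G> - {F}"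

end

theory Submission
  imports Defs
begin


locale flat =
  fixes L :: "'a set" and le :: "'a \<Rightarrow> 'a \<Rightarrow> bool"
  assumes fin: "finite L" and nonempty: "L \<noteq> {}" and lat: "lattice_on L le"
begin

lemma po: "partial_order_on' L le" using lat by (simp add: lattice_on_def)
lemma lrefl: "x \<in> L \<Longrightarrow> le x x" using po unfolding partial_order_on'_def by blast
lemma lantisym: "x \<in> L \<Longrightarrow> y \<in> L \<Longrightarrow> le x y \<Longrightarrow> le y x \<Longrightarrow> x = y"
  using po unfolding partial_order_on'_def by blast
lemma ltrans: "x \<in> L \<Longrightarrow> y \<in> L \<Longrightarrow> z \<in> L \<Longrightarrow> le x y \<Longrightarrow> le y z \<Longrightarrow> le x z"
  using po unfolding partial_order_on'_def by blast

lemma is_lub_unique: "is_lub L le S z \<Longrightarrow> is_lub L le S z' \<Longrightarrow> z = z'"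
  unfolding is_lub_def using lantisym by blast
lemma is_glb_unique: "is_glb L le S z \<Longrightarrow> is_glb L le S z' \<Longrightarrow> z = z'"
  unfolding is_glb_def using lantisym by blast
lemma lub_eq: "is_lub L le S z \<Longrightarrow> lub L le S = z"
  unfolding lub_def by (rule the_equality) (auto intro: is_lub_unique)
lemma glb_eq: "is_glb L le S z \<Longrightarrow> glb L le S = z"
  unfolding glb_def by (rule the_equality) (auto intro: is_glb_unique)

lemma glb_ne: "finite S \<Longrightarrow> S \<noteq> {} \<Longrightarrow> S \<subseteq> L \<Longrightarrow> \<exists>z. is_glb L le S z"
proof (induction S rule: finite_ne_induct)
  case (singleton x)
  then show ?case using lrefl by (auto simp: is_glb_def)
next
  case (insert x S)
  then obtain z where z: "is_glb L le S z" by auto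
  have "x \<in> L" "z \<in> L" using insert z by (auto simp: is_glb_def)
  then obtain w where w: "is_glb L le {x, z} w" using lat unfolding lattice_on_def by blast
  have xS: "x \<in> L" "S \<subseteq> L" using insert.prems by auto
  have "is_glb L le (insert x S) w"
    unfolding is_glb_def
  proof (intro conjI ballI impI)
    show "w \<in> L" using w unfolding is_glb_def by blast
    fix s assume "s \<in> insert x S"
    then show "le w s"
    proof
      assume "s = x" then show ?thesis using w unfolding is_glb_def by blast
    next
      assume s: "s \<in> S"
      have "le w z" "le z s" "w \<in> L" using w z s unfolding is_glb_def by auto
      then show ?thesis using ltrans[of w z s] xS s \<open>z \<in> L\<close> by blast
    qed
  next
    fix u assume u: "u \<in> L" "\<forall>s\<in>insert x S. le u s"
    then have "le u z" using z unfolding is_glb_def by blast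
    then show "le u w" using u w unfolding is_glb_def by blast
  qed
  then show ?case by blast
qed

lemma lub_ne: "finite S \<Longrightarrow> S \<noteq> {} \<Longrightarrow> S \<subseteq> L \<Longrightarrow> \<exists>z. is_lub L le S z"
proof (induction S rule: finite_ne_induct)
  case (singleton x)
  then show ?case using lrefl by (auto simp: is_lub_def)
next
  case (insert x S)
  then obtain z where z: "is_lub L le S z" by auto
  have "x \<in> L" "z \<in> L" using insert z by (auto simp: is_lub_def)
  then obtain w where w: "is_lub L le {x, z} w" using lat unfolding lattice_on_def by blast
  have xS: "x \<in> L" "S \<subseteq> L" using insert.prems by auto
  have "is_lub L le (insert x S) w"
    unfolding is_lub_def
  proof (intro conjI ballI impI)
    show "w \<in> L" using w unfolding is_lub_def by blast
    fix s assume "s \<in> insert x S"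
    then show "le s w"
    proof
      assume "s = x" then show ?thesis using w unfolding is_lub_def by blast
    next
      assume s: "s \<in> S"
      have "le z w" "le s z" "w \<in> L" using w z s unfolding is_lub_def by auto
      then show ?thesis using ltrans[of s z w] xS s \<open>z \<in> L\<close> by blast
    qed
  next
    fix u assume u: "u \<in> L" "\<forall>s\<in>insert x S. le s u"
    then have "le z u" using z unfolding is_lub_def by blast
    then show "le w u" using u w unfolding is_lub_def by blast
  qed
  then show ?case by blast
qed

lemma lub_ex: "S \<subseteq> L \<Longrightarrow> \<exists>z. is_lub L le S z"
proof (cases "S = {}")
  case True
  obtain z where z: "is_glb L le L z" using glb_ne fin nonempty by blast
  then have "is_lub L le {} z" unfolding is_glb_def is_lub_def by auto
  then show ?thesis using True by blast
next
  case False
  assume "S \<subseteq> L"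
  then show ?thesis using lub_ne False fin finite_subset by blast
qed

lemma lub_is: "S \<subseteq> L \<Longrightarrow> is_lub L le S (lub L le S)"
  using lub_ex lub_eq by blast
lemma lub_in: "S \<subseteq> L \<Longrightarrow> lub L le S \<in> L"
  using lub_is unfolding is_lub_def by blast
lemma lub_upper: "S \<subseteq> L \<Longrightarrow> s \<in> S \<Longrightarrow> le s (lub L le S)"
  using lub_is unfolding is_lub_def by blast
lemma lub_least: "S \<subseteq> L \<Longrightarrow> w \<in> L \<Longrightarrow> (\<And>s. s \<in> S \<Longrightarrow> le s w) \<Longrightarrow> le (lub L le S) w"
  using lub_is unfolding is_lub_def by blast

lemma glb2: "x \<in> L \<Longrightarrow> y \<in> L \<Longrightarrow> is_glb L le {x,y} (lmeet L le x y)"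
proof -
  assume "x \<in> L" "y \<in> L"
  then obtain z where "is_glb L le {x,y} z" using lat unfolding lattice_on_def by blast
  then show ?thesis unfolding lmeet_def using glb_eq by simp
qed
lemma meet_in: "x \<in> L \<Longrightarrow> y \<in> L \<Longrightarrow> lmeet L le x y \<in> L"
  using glb2 unfolding is_glb_def by blast
lemma meet_le1: "x \<in> L \<Longrightarrow> y \<in> L \<Longrightarrow> le (lmeet L le x y) x"
  using glb2 unfolding is_glb_def by blast
lemma meet_le2: "x \<in> L \<Longrightarrow> y \<in> L \<Longrightarrow> le (lmeet L le x y) y"
  using glb2 unfolding is_glb_def by blast
lemma meet_greatest: "x \<in> L \<Longrightarrow> y \<in> L \<Longrightarrow> w \<in> L \<Longrightarrow> le w x \<Longrightarrow> le w y \<Longrightarrow> le w (lmeet L le x y)"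
  using glb2 unfolding is_glb_def by blast
lemma meet_comm: "lmeet L le x y = lmeet L le y x"
  unfolding lmeet_def by (simp add: insert_commute)
lemma join_comm: "ljoin L le x y = ljoin L le y x"
  unfolding ljoin_def by (simp add: insert_commute)
lemma join_in: "x \<in> L \<Longrightarrow> y \<in> L \<Longrightarrow> ljoin L le x y \<in> L"
  unfolding ljoin_def by (rule lub_in) auto
lemma join_ge1: "x \<in> L \<Longrightarrow> y \<in> L \<Longrightarrow> le x (ljoin L le x y)"
  unfolding ljoin_def by (rule lub_upper) auto
lemma join_ge2: "x \<in> L \<Longrightarrow> y \<in> L \<Longrightarrow> le y (ljoin L le x y)"
  unfolding ljoin_def by (rule lub_upper) auto
lemma join_least: "x \<in> L \<Longrightarrow> y \<in> L \<Longrightarrow> w \<in> L \<Longrightarrow> le x w \<Longrightarrow> le y w \<Longrightarrow> le (ljoin L le x y) w"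
  unfolding ljoin_def by (rule lub_least) auto

lemma bot_in: "lbot L le \<in> L" unfolding lbot_def by (rule lub_in) auto
lemma bot_le: "x \<in> L \<Longrightarrow> le (lbot L le) x" unfolding lbot_def by (rule lub_least) auto
lemma top_in: "ltop L le \<in> L" unfolding ltop_def by (rule lub_in) auto
lemma le_top: "x \<in> L \<Longrightarrow> le x (ltop L le)" unfolding ltop_def by (rule lub_upper) auto

lemma meet_eq_iff: "x \<in> L \<Longrightarrow> y \<in> L \<Longrightarrow> le x y \<Longrightarrow> lmeet L le x y = x"
  by (rule lantisym) (auto intro: meet_in meet_le1 meet_greatest lrefl)
lemma join_eq_iff: "x \<in> L \<Longrightarrow> y \<in> L \<Longrightarrow> le x y \<Longrightarrow> ljoin L le x y = y"
  by (rule lantisym) (auto intro: join_in join_ge2 join_least lrefl)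


lemma sub_is_lub: "L' \<subseteq> L \<Longrightarrow> is_lub L le S z \<Longrightarrow> z \<in> L' \<Longrightarrow> is_lub L' le S z"
  unfolding is_lub_def by blast
lemma sub_is_glb: "L' \<subseteq> L \<Longrightarrow> is_glb L le S z \<Longrightarrow> z \<in> L' \<Longrightarrow> is_glb L' le S z"
  unfolding is_glb_def by blast
lemma lub_eq_sub: "L' \<subseteq> L \<Longrightarrow> is_lub L' le S z \<Longrightarrow> lub L' le S = z"
  unfolding lub_def
  by (rule the_equality) (auto simp: is_lub_def intro: lantisym)
lemma glb_eq_sub: "L' \<subseteq> L \<Longrightarrow> is_glb L' le S z \<Longrightarrow> glb L' le S = z"
  unfolding glb_def
  by (rule the_equality) (auto simp: is_glb_def intro: lantisym)

lemma is_lub_join: "x \<in> L \<Longrightarrow> y \<in> L \<Longrightarrow> is_lub L le {x,y} (ljoin L le x y)"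
  unfolding ljoin_def by (rule lub_is) auto

lemma sub_flat:
  assumes sub: "L' \<subseteq> L" and ne: "L' \<noteq> {}"
    and j: "\<And>x y. x \<in> L' \<Longrightarrow> y \<in> L' \<Longrightarrow> ljoin L le x y \<in> L'"
    and m: "\<And>x y. x \<in> L' \<Longrightarrow> y \<in> L' \<Longrightarrow> lmeet L le x y \<in> L'"
  shows "flat L' le"
proof
  show "finite L'" using sub fin finite_subset by blast
  show "L' \<noteq> {}" by fact
  show "lattice_on L' le"
    unfolding lattice_on_def partial_order_on'_def
  proof (intro conjI ballI allI impI)
    fix x assume "x \<in> L'" then show "le x x" using sub lrefl by blast
  next
    fix x y assume "x \<in> L'" "y \<in> L'" "le x y \<and> le y x" then show "x = y" using sub lantisym by blast
  next
    fix x y z assume "x \<in> L'" "y \<in> L'" "z \<in> L'" "le x y \<and> le y z" then show "le x z" using sub ltrans by blast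
  next
    fix x y assume xy: "x \<in> L'" "y \<in> L'"
    show "\<exists>z. is_lub L' le {x, y} z"
      using sub_is_lub[OF sub is_lub_join j[OF xy]] xy sub by blast
    show "\<exists>z. is_glb L' le {x, y} z"
      using sub_is_glb[OF sub glb2 m[OF xy]] xy sub by blast
  qed
qed

lemma ex_minimal: "finite S \<Longrightarrow> S \<subseteq> L \<Longrightarrow> x \<in> S \<Longrightarrow> \<exists>c\<in>S. le c x \<and> (\<forall>z\<in>S. le z c \<longrightarrow> z = c)"
proof (induction "card {z\<in>S. le z x}" arbitrary: x rule: less_induct)
  case less
  show ?case
  proof (cases "\<forall>z\<in>S. le z x \<longrightarrow> z = x")
    case True then show ?thesis using less.prems lrefl by blast
  next
    case False
    then obtain z where z: "z \<in> S" "le z x" "z \<noteq> x" by blast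
    have "{w\<in>S. le w z} \<subset> {w\<in>S. le w x}"
    proof
      show "{w\<in>S. le w z} \<subseteq> {w\<in>S. le w x}" using z less.prems ltrans by blast
      have "x \<notin> {w\<in>S. le w z}" using z less.prems lantisym by blast
      moreover have "x \<in> {w\<in>S. le w x}" using less.prems lrefl by blast
      ultimately show "{w\<in>S. le w z} \<noteq> {w\<in>S. le w x}" by blast
    qed
    then have "card {w\<in>S. le w z} < card {w\<in>S. le w x}"
      using less.prems by (intro psubset_card_mono) auto
    from less.hyps[OF this less.prems(1,2) z(1)] obtain c where
      "c \<in> S" "le c z" "\<forall>za\<in>S. le za c \<longrightarrow> za = c" by blast
    then show ?thesis using z less.prems ltrans[of c z x] by blast
  qed
qed

lemma ex_maximal: "finite S \<Longrightarrow> S \<subseteq> L \<Longrightarrow> x \<in> S \<Longrightarrow> \<exists>c\<in>S. le x c \<and> (\<forall>z\<in>S. le c z \<longrightarrow> z = c)"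
proof (induction "card {z\<in>S. le x z}" arbitrary: x rule: less_induct)
  case less
  show ?case
  proof (cases "\<forall>z\<in>S. le x z \<longrightarrow> z = x")
    case True then show ?thesis using less.prems lrefl by blast
  next
    case False
    then obtain z where z: "z \<in> S" "le x z" "z \<noteq> x" by blast
    have "{w\<in>S. le z w} \<subset> {w\<in>S. le x w}"
    proof
      show "{w\<in>S. le z w} \<subseteq> {w\<in>S. le x w}" using z less.prems ltrans by blast
      have "x \<notin> {w\<in>S. le z w}" using z less.prems lantisym by blast
      moreover have "x \<in> {w\<in>S. le x w}" using less.prems lrefl by blast
      ultimately show "{w\<in>S. le z w} \<noteq> {w\<in>S. le x w}" by blast
    qed
    then have "card {w\<in>S. le z w} < card {w\<in>S. le x w}"
      using less.prems by (intro psubset_card_mono) auto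
    from less.hyps[OF this less.prems(1,2) z(1)] obtain c where
      "c \<in> S" "le z c" "\<forall>za\<in>S. le c za \<longrightarrow> za = c" by blast
    then show ?thesis using z less.prems ltrans[of x z c] by blast
  qed
qed

end

locale geo = flat +
  assumes geo: "geometric_lattice L le"
begin

lemma atomistic: "x \<in> L \<Longrightarrow> x = lub L le {a \<in> atoms L le. le a x}"
  using geo unfolding geometric_lattice_def by blast

lemma birk: "x \<in> L \<Longrightarrow> y \<in> L \<Longrightarrow> covers L le (lmeet L le x y) x \<Longrightarrow> covers L le (lmeet L le x y) y
   \<Longrightarrow> covers L le y (ljoin L le x y)"
  using geo unfolding geometric_lattice_def by blast

lemma ssm: "a \<in> L \<Longrightarrow> b \<in> L \<Longrightarrow> covers L le (lmeet L le a b) a \<Longrightarrow> covers L le b (ljoin L le a b)"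
proof (induction "card {z\<in>L. le (lmeet L le a b) z \<and> le z b}" arbitrary: a b rule: less_induct)
  case less
  note ab = less.prems(1,2)
  let ?m = "lmeet L le a b"
  have mL: "?m \<in> L" using ab meet_in by blast
  show ?case
  proof (cases "?m = b")
    case True
    then have "le b a" using meet_le1[OF ab] by simp
    then have "ljoin L le a b = a" using join_eq_iff[OF ab(2,1)] join_comm by metis
    then show ?thesis using less.prems True by simp
  next
    case False
    let ?U = "{z \<in> L. le ?m z \<and> le z b \<and> z \<noteq> ?m}"
    have bU: "b \<in> ?U" using False ab meet_le2 lrefl by auto
    obtain c where c: "c \<in> ?U" "le c b" "\<forall>z\<in>?U. le z c \<longrightarrow> z = c"
      using ex_minimal[of ?U b] bU fin by (auto intro: finite_subset)
    have cL: "c \<in> L" using c by blast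
    have cov_mc: "covers L le ?m c"
      unfolding covers_def
    proof (intro conjI ballI impI)
      show "?m \<in> L" "c \<in> L" "le ?m c" "?m \<noteq> c" using c mL by auto
      fix z assume z: "z \<in> L" "le ?m z \<and> le z c"
      show "z = ?m \<or> z = c"
      proof (cases "z = ?m")
        case False
        have "le z b" using ltrans[of z c b] z cL ab c by blast
        then have "z \<in> ?U" using z False by blast
        then show ?thesis using c(3) z by blast
      qed simp
    qed
    have mac: "lmeet L le a c = ?m"
    proof (rule lantisym)
      show "lmeet L le a c \<in> L" "?m \<in> L" using ab cL meet_in by auto
      have "le (lmeet L le a c) b" using ltrans[OF meet_in[OF ab(1) cL] cL ab(2) meet_le2[OF ab(1) cL]] c by blast
      then show "le (lmeet L le a c) ?m"
        using meet_greatest[OF ab meet_in[OF ab(1) cL]] meet_le1[OF ab(1) cL] by blast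
      show "le ?m (lmeet L le a c)"
        using meet_greatest[OF ab(1) cL mL] meet_le1[OF ab] c by blast
    qed
    have cov_ca: "covers L le c (ljoin L le a c)"
      using birk[OF ab(1) cL] less.prems(3) cov_mc mac by simp
    define a' where "a' = ljoin L le a c"
    have a'L: "a' \<in> L" using ab cL join_in a'_def by blast
    have "le c (lmeet L le a' b)"
      using meet_greatest[OF a'L ab(2) cL] join_ge2[OF ab(1) cL] c unfolding a'_def by blast
    moreover have "le (lmeet L le a' b) a'" using a'L ab meet_le1 by blast
    ultimately have "lmeet L le a' b = c \<or> lmeet L le a' b = a'"
      using cov_ca a'L ab meet_in unfolding covers_def a'_def by blast
    moreover have "lmeet L le a' b \<noteq> a'"
    proof
      assume "lmeet L le a' b = a'"
      then have "le a' b" using meet_le2 a'L ab by metis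
      then have "le a b" using ltrans[of a a' b] ab a'L join_ge1[OF ab(1) cL] unfolding a'_def by blast
      then have "?m = a" using meet_eq_iff ab by blast
      then show False using less.prems(3) unfolding covers_def by blast
    qed
    ultimately have mab: "lmeet L le a' b = c" by blast
    have cov2: "covers L le (lmeet L le a' b) a'" using mab cov_ca a'_def by simp
    have lt: "card {z\<in>L. le (lmeet L le a' b) z \<and> le z b} < card {z\<in>L. le ?m z \<and> le z b}"
    proof (rule psubset_card_mono)
      show "finite {z\<in>L. le ?m z \<and> le z b}" using fin by auto
      have "{z\<in>L. le c z \<and> le z b} \<subseteq> {z\<in>L. le ?m z \<and> le z b}"
        using c mL cL ltrans[of ?m c] by blast
      moreover have "?m \<notin> {z\<in>L. le c z \<and> le z b}"
        using c mL cL lantisym by blast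
      moreover have "?m \<in> {z\<in>L. le ?m z \<and> le z b}" using mL lrefl ab meet_le2 by blast
      ultimately show "{z\<in>L. le (lmeet L le a' b) z \<and> le z b} \<subset> {z\<in>L. le ?m z \<and> le z b}"
        using mab by blast
    qed
    have "covers L le b (ljoin L le a' b)" using less.hyps[OF lt a'L ab(2) cov2] .
    moreover have "ljoin L le a' b = ljoin L le a b"
    proof (rule lantisym)
      show "ljoin L le a' b \<in> L" "ljoin L le a b \<in> L" using a'L ab join_in by auto
      have jab: "ljoin L le a b \<in> L" using join_in[OF ab] .
      have "le c (ljoin L le a b)" using ltrans[OF cL ab(2) jab] c join_ge2[OF ab] by blast
      then have "le a' (ljoin L le a b)" unfolding a'_def
        using join_least[OF ab(1) cL jab] join_ge1[OF ab] by blast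
      then show "le (ljoin L le a' b) (ljoin L le a b)"
        using join_least[OF a'L ab(2) jab] join_ge2[OF ab] by blast
      have "le a a'" unfolding a'_def using ab cL join_ge1 by blast
      have ja'b: "ljoin L le a' b \<in> L" using join_in[OF a'L ab(2)] .
      have "le a (ljoin L le a' b)" using ltrans[OF ab(1) a'L ja'b \<open>le a a'\<close> join_ge1[OF a'L ab(2)]] .
      then show "le (ljoin L le a b) (ljoin L le a' b)"
        using join_least[OF ab ja'b] join_ge2[OF a'L ab(2)] by blast
    qed
    ultimately show ?thesis by simp
  qed
qed

end

context flat begin

lemma lub_mono_sets: "S \<subseteq> L \<Longrightarrow> w \<in> L \<Longrightarrow> (\<And>s. s \<in> S \<Longrightarrow> le s w) \<Longrightarrow> le (lub L le S) w"
  by (rule lub_least)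



lemma restr_sub: "restr_L L le F \<subseteq> L" by (auto simp: restr_L_def)

lemma restr_lub:
  assumes F: "F \<in> L" and S: "S \<subseteq> restr_L L le F"
  shows "lub (restr_L L le F) le S = lub L le S"
proof -
  have SL: "S \<subseteq> L" using S restr_sub by blast
  have "le (lub L le S) F" using lub_least[OF SL F] S by (auto simp: restr_L_def)
  then have "lub L le S \<in> restr_L L le F" using lub_in[OF SL] by (auto simp: restr_L_def)
  then have "is_lub (restr_L L le F) le S (lub L le S)"
    using sub_is_lub[OF restr_sub lub_is[OF SL]] by blast
  then show ?thesis using lub_eq_sub[OF restr_sub] by blast
qed

lemma restr_meet:
  assumes F: "F \<in> L" and x: "x \<in> restr_L L le F" and y: "y \<in> restr_L L le F"
  shows "lmeet (restr_L L le F) le x y = lmeet L le x y"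
proof -
  have xy: "x \<in> L" "y \<in> L" "le x F" using x y by (auto simp: restr_L_def)
  have "lmeet L le x y \<in> restr_L L le F"
    using meet_in[OF xy(1,2)] ltrans[OF meet_in[OF xy(1,2)] xy(1) F meet_le1[OF xy(1,2)] xy(3)]
    by (auto simp: restr_L_def)
  then have "is_glb (restr_L L le F) le {x,y} (lmeet L le x y)"
    using sub_is_glb[OF restr_sub glb2[OF xy(1,2)]] by blast
  then show ?thesis unfolding lmeet_def[of "restr_L L le F"] using glb_eq_sub[OF restr_sub]
    by blast
qed

lemma restr_join:
  assumes F: "F \<in> L" and x: "x \<in> restr_L L le F" and y: "y \<in> restr_L L le F"
  shows "ljoin (restr_L L le F) le x y = ljoin L le x y"
  unfolding ljoin_def using restr_lub[OF F] x y by simp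

lemma restr_bot: "F \<in> L \<Longrightarrow> lbot (restr_L L le F) le = lbot L le"
  unfolding lbot_def using restr_lub by blast

lemma restr_covers:
  assumes F: "F \<in> L" and x: "x \<in> restr_L L le F" and y: "y \<in> restr_L L le F"
  shows "covers (restr_L L le F) le x y \<longleftrightarrow> covers L le x y"
proof -
  have yF: "y \<in> L" "le y F" using y by (auto simp: restr_L_def)
  have "z \<in> restr_L L le F" if "z \<in> L" "le z y" for z
    using that ltrans[OF that(1) yF(1) F that(2) yF(2)] by (auto simp: restr_L_def)
  then show ?thesis unfolding covers_def using x y restr_sub by blast
qed

lemma restr_atoms:
  assumes F: "F \<in> L"
  shows "atoms (restr_L L le F) le = {a \<in> atoms L le. le a F}"
proof -
  have b: "lbot L le \<in> restr_L L le F" using bot_in bot_le[OF F] by (auto simp: restr_L_def)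
  show ?thesis unfolding atoms_def restr_bot[OF F]
    using restr_covers[OF F b] by (auto simp: restr_L_def)
qed

lemma restr_flat: assumes F: "F \<in> L" shows "flat (restr_L L le F) le"
proof (rule sub_flat[OF restr_sub])
  show "restr_L L le F \<noteq> {}" using F lrefl by (auto simp: restr_L_def)
  fix x y assume x: "x \<in> restr_L L le F" and y: "y \<in> restr_L L le F"
  have xy: "x \<in> L" "y \<in> L" "le x F" "le y F" using x y by (auto simp: restr_L_def)
  show "ljoin L le x y \<in> restr_L L le F"
    using join_in[OF xy(1,2)] join_least[OF xy(1,2) F xy(3,4)] by (auto simp: restr_L_def)
  show "lmeet L le x y \<in> restr_L L le F"
    using meet_in[OF xy(1,2)] ltrans[OF meet_in[OF xy(1,2)] xy(1) F meet_le1[OF xy(1,2)] xy(3)]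
    by (auto simp: restr_L_def)
qed



lemma contr_sub: "contr_L L le F \<subseteq> L" by (auto simp: contr_L_def)

lemma contr_lub:
  assumes F: "F \<in> L" and S: "S \<subseteq> contr_L L le F"
  shows "lub (contr_L L le F) le S = lub L le (insert F S)"
proof -
  have SL: "insert F S \<subseteq> L" using S F restr_sub by (auto simp: contr_L_def)
  have "lub L le (insert F S) \<in> contr_L L le F"
    using lub_in[OF SL] lub_upper[OF SL] by (auto simp: contr_L_def)
  moreover have "is_lub L le (insert F S) (lub L le (insert F S))" using lub_is[OF SL] .
  ultimately have "is_lub (contr_L L le F) le S (lub L le (insert F S))"
    unfolding is_lub_def contr_L_def by auto
  then show ?thesis using lub_eq_sub[OF contr_sub] by blast
qed

lemma contr_meet:
  assumes F: "F \<in> L" and x: "x \<in> contr_L L le F" and y: "y \<in> contr_L L le F"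
  shows "lmeet (contr_L L le F) le x y = lmeet L le x y"
proof -
  have xy: "x \<in> L" "y \<in> L" "le F x" "le F y" using x y by (auto simp: contr_L_def)
  have "lmeet L le x y \<in> contr_L L le F"
    using meet_in[OF xy(1,2)] meet_greatest[OF xy(1,2) F xy(3,4)]
    by (auto simp: contr_L_def)
  then have "is_glb (contr_L L le F) le {x,y} (lmeet L le x y)"
    using sub_is_glb[OF contr_sub glb2[OF xy(1,2)]] by blast
  then show ?thesis unfolding lmeet_def[of "contr_L L le F"] using glb_eq_sub[OF contr_sub]
    by blast
qed

lemma contr_join:
  assumes F: "F \<in> L" and x: "x \<in> contr_L L le F" and y: "y \<in> contr_L L le F"
  shows "ljoin (contr_L L le F) le x y = ljoin L le x y"
proof -
  have xy: "x \<in> L" "y \<in> L" "le F x" "le F y" using x y by (auto simp: contr_L_def)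
  have "ljoin L le x y \<in> contr_L L le F"
    using join_in[OF xy(1,2)] ltrans[OF F xy(1) join_in[OF xy(1,2)] xy(3) join_ge1[OF xy(1,2)]]
    by (auto simp: contr_L_def)
  then have "is_lub (contr_L L le F) le {x,y} (ljoin L le x y)"
    using sub_is_lub[OF contr_sub is_lub_join[OF xy(1,2)]] by blast
  then show ?thesis unfolding ljoin_def[of "contr_L L le F"] using lub_eq_sub[OF contr_sub]
    by (simp add: ljoin_def)
qed

lemma contr_bot: assumes F: "F \<in> L" shows "lbot (contr_L L le F) le = F"
proof -
  have "lbot (contr_L L le F) le = lub L le {F}" unfolding lbot_def using contr_lub[OF F] by simp
  also have "\<dots> = F" using lub_eq[of "{F}" F] F lrefl by (auto simp: is_lub_def)
  finally show ?thesis .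
qed

lemma contr_covers:
  assumes F: "F \<in> L" and x: "x \<in> contr_L L le F" and y: "y \<in> contr_L L le F"
  shows "covers (contr_L L le F) le x y \<longleftrightarrow> covers L le x y"
proof -
  have xF: "x \<in> L" "le F x" using x by (auto simp: contr_L_def)
  have "z \<in> contr_L L le F" if "z \<in> L" "le x z" for z
    using that ltrans[OF F xF(1) that(1) xF(2) that(2)] by (auto simp: contr_L_def)
  then show ?thesis unfolding covers_def using x y contr_sub by blast
qed

lemma contr_atoms:
  assumes F: "F \<in> L"
  shows "atoms (contr_L L le F) le = {a. covers L le F a}"
proof -
  have b: "F \<in> contr_L L le F" using F lrefl by (auto simp: contr_L_def)
  have "a \<in> contr_L L le F" if "covers L le F a" for a
    using that by (auto simp: contr_L_def covers_def)
  then show ?thesis unfolding atoms_def contr_bot[OF F]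
    using contr_covers[OF F b] by auto
qed

lemma contr_flat: assumes F: "F \<in> L" shows "flat (contr_L L le F) le"
proof (rule sub_flat[OF contr_sub])
  show "contr_L L le F \<noteq> {}" using F lrefl by (auto simp: contr_L_def)
  fix x y assume x: "x \<in> contr_L L le F" and y: "y \<in> contr_L L le F"
  have xy: "x \<in> L" "y \<in> L" "le F x" "le F y" using x y by (auto simp: contr_L_def)
  show "ljoin L le x y \<in> contr_L L le F"
    using join_in[OF xy(1,2)] ltrans[OF F xy(1) join_in[OF xy(1,2)] xy(3) join_ge1[OF xy(1,2)]]
    by (auto simp: contr_L_def)
  show "lmeet L le x y \<in> contr_L L le F"
    using meet_in[OF xy(1,2)] meet_greatest[OF xy(1,2) F xy(3,4)]
    by (auto simp: contr_L_def)
qed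

end

context geo begin

lemma restr_geo: assumes F: "F \<in> L" shows "geometric_lattice (restr_L L le F) le"
proof -
  interpret R: flat "restr_L L le F" le using restr_flat[OF F] .
  have 1: "x = lub (restr_L L le F) le {a \<in> atoms (restr_L L le F) le. le a x}"
    if x: "x \<in> restr_L L le F" for x
  proof -
    have xL: "x \<in> L" "le x F" using x by (auto simp: restr_L_def)
    have eq: "{a \<in> atoms (restr_L L le F) le. le a x} = {a \<in> atoms L le. le a x}"
      unfolding restr_atoms[OF F] using xL ltrans[OF _ xL(1) F _ xL(2)]
      by (auto simp: atoms_def)
    have sub: "{a \<in> atoms L le. le a x} \<subseteq> restr_L L le F"
      using xL ltrans[OF _ xL(1) F _ xL(2)] by (auto simp: atoms_def restr_L_def)
    show ?thesis unfolding eq restr_lub[OF F sub] using atomistic[OF xL(1)] .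
  qed
  have 2: "covers (restr_L L le F) le x (ljoin (restr_L L le F) le x y) \<and>
           covers (restr_L L le F) le y (ljoin (restr_L L le F) le x y)"
    if x: "x \<in> restr_L L le F" and y: "y \<in> restr_L L le F"
      and c1: "covers (restr_L L le F) le (lmeet (restr_L L le F) le x y) x"
      and c2: "covers (restr_L L le F) le (lmeet (restr_L L le F) le x y) y" for x y
  proof -
    have m: "lmeet L le x y \<in> restr_L L le F" using R.meet_in[OF x y] restr_meet[OF F x y] by simp
    have j: "ljoin L le x y \<in> restr_L L le F" using R.join_in[OF x y] restr_join[OF F x y] by simp
    have "covers L le (lmeet L le x y) x" "covers L le (lmeet L le x y) y"
      using c1 c2 restr_covers[OF F m] x y restr_meet[OF F x y] by auto
    moreover have "x \<in> L" "y \<in> L" using x y restr_sub by auto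
    ultimately have "covers L le x (ljoin L le x y) \<and> covers L le y (ljoin L le x y)"
      using geo unfolding geometric_lattice_def by blast
    then show ?thesis using restr_covers[OF F x j] restr_covers[OF F y j] restr_join[OF F x y] by simp
  qed
  show ?thesis unfolding geometric_lattice_def
    using R.fin R.nonempty R.lat 1 2 by blast
qed

lemma contr_geo: assumes F: "F \<in> L" shows "geometric_lattice (contr_L L le F) le"
proof -
  interpret C: flat "contr_L L le F" le using contr_flat[OF F] .
  have 1: "x = lub (contr_L L le F) le {a \<in> atoms (contr_L L le F) le. le a x}"
    if x: "x \<in> contr_L L le F" for x
  proof -
    have xL: "x \<in> L" "le F x" using x by (auto simp: contr_L_def)
    define A where "A = {a \<in> atoms (contr_L L le F) le. le a x}"
    have A: "A = {a. covers L le F a \<and> le a x}" unfolding A_def contr_atoms[OF F] by auto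
    have AC: "A \<subseteq> contr_L L le F" unfolding A by (auto simp: covers_def contr_L_def)
    have AL: "insert F A \<subseteq> L" using AC F contr_sub by blast
    define y where "y = lub L le (insert F A)"
    have yL: "y \<in> L" using lub_in[OF AL] y_def by simp
    have Fy: "le F y" using lub_upper[OF AL] y_def by simp
    have Ay: "\<And>a. a \<in> A \<Longrightarrow> le a y" using lub_upper[OF AL] y_def by simp
    have "le y x" unfolding y_def using lub_least[OF AL xL(1)] xL A by blast
    moreover have "le x y"
    proof -
      have atL: "{a \<in> atoms L le. le a x} \<subseteq> L" by (auto simp: atoms_def)
      have "le (lub L le {a \<in> atoms L le. le a x}) y"
      proof (rule lub_least[OF atL yL])
        fix a assume a: "a \<in> {a \<in> atoms L le. le a x}"
        have aL: "a \<in> L" and cba: "covers L le (lbot L le) a" and ax: "le a x"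
          using a by (auto simp: atoms_def)
        show "le a y"
        proof (cases "le a F")
          case True show ?thesis using ltrans[OF aL F yL True Fy] by blast
        next
          case False
          have m1: "le (lbot L le) (lmeet L le a F)" using bot_le meet_in[OF aL F] by blast
          have m2: "le (lmeet L le a F) a" using meet_le1[OF aL F] .
          have "lmeet L le a F = lbot L le \<or> lmeet L le a F = a"
            using cba m1 m2 meet_in[OF aL F] unfolding covers_def by blast
          moreover have "lmeet L le a F \<noteq> a" using meet_le2[OF aL F] False by metis
          ultimately have "lmeet L le a F = lbot L le" by blast
          then have "covers L le (lmeet L le a F) a" using cba by simp
          then have cov: "covers L le F (ljoin L le a F)" using ssm[OF aL F] by blast
          have "le (ljoin L le a F) x" using join_least[OF aL F xL(1) ax xL(2)] .
          then have "ljoin L le a F \<in> A" using A cov by blast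
          then have "le (ljoin L le a F) y" using Ay by blast
          then show ?thesis using ltrans[OF aL join_in[OF aL F] yL join_ge1[OF aL F]] by blast
        qed
      qed
      then show ?thesis using atomistic[OF xL(1)] by simp
    qed
    ultimately have "x = y" using lantisym[OF xL(1) yL] by blast
    then show ?thesis unfolding A_def[symmetric] contr_lub[OF F AC] y_def .
  qed
  have 2: "covers (contr_L L le F) le x (ljoin (contr_L L le F) le x y) \<and>
           covers (contr_L L le F) le y (ljoin (contr_L L le F) le x y)"
    if x: "x \<in> contr_L L le F" and y: "y \<in> contr_L L le F"
      and c1: "covers (contr_L L le F) le (lmeet (contr_L L le F) le x y) x"
      and c2: "covers (contr_L L le F) le (lmeet (contr_L L le F) le x y) y" for x y
  proof -
    have m: "lmeet L le x y \<in> contr_L L le F" using C.meet_in[OF x y] contr_meet[OF F x y] by simp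
    have j: "ljoin L le x y \<in> contr_L L le F" using C.join_in[OF x y] contr_join[OF F x y] by simp
    have "covers L le (lmeet L le x y) x" "covers L le (lmeet L le x y) y"
      using c1 c2 contr_covers[OF F m] x y contr_meet[OF F x y] by auto
    moreover have "x \<in> L" "y \<in> L" using x y contr_sub by auto
    ultimately have "covers L le x (ljoin L le x y) \<and> covers L le y (ljoin L le x y)"
      using geo unfolding geometric_lattice_def by blast
    then show ?thesis using contr_covers[OF F x j] contr_covers[OF F y j] contr_join[OF F x y] by simp
  qed
  show ?thesis unfolding geometric_lattice_def
    using C.fin C.nonempty C.lat 1 2 by blast
qed

end

context flat begin

lemma maxs_char:
  assumes SL: "S \<subseteq> L" and TS: "T \<subseteq> S" and up: "\<And>s. s \<in> S \<Longrightarrow> \<exists>t\<in>T. le s t"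
    and ac: "\<And>t1 t2. t1 \<in> T \<Longrightarrow> t2 \<in> T \<Longrightarrow> le t1 t2 \<Longrightarrow> t1 = t2"
  shows "maxs le S = T"
proof
  show "maxs le S \<subseteq> T"
  proof
    fix x assume "x \<in> maxs le S"
    then have x: "x \<in> S" "\<forall>y\<in>S. le x y \<longrightarrow> y = x" by (auto simp: maxs_def)
    obtain t where "t \<in> T" "le x t" using up[OF x(1)] by blast
    then show "x \<in> T" using x TS by auto
  qed
  show "T \<subseteq> maxs le S"
  proof
    fix t assume t: "t \<in> T"
    have "y = t" if y: "y \<in> S" "le t y" for y
    proof -
      obtain t' where t': "t' \<in> T" "le y t'" using up[OF y(1)] by blast
      have "le t t'" using ltrans[of t y t'] t t' y TS SL by blast
      then have "t = t'" using ac t t' by blast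
      then show ?thesis using lantisym[of y t] y t' t TS SL by blast
    qed
    then show "t \<in> maxs le S" using t TS by (auto simp: maxs_def)
  qed
qed

lemma meet_mono: "x \<in> L \<Longrightarrow> y \<in> L \<Longrightarrow> K \<in> L \<Longrightarrow> le x y \<Longrightarrow> le (lmeet L le x K) (lmeet L le y K)"
proof -
  assume a: "x \<in> L" "y \<in> L" "K \<in> L" "le x y"
  have "le (lmeet L le x K) y" using ltrans[OF meet_in[OF a(1,3)] a(1,2) meet_le1[OF a(1,3)] a(4)] .
  then show ?thesis using meet_greatest[OF a(2,3) meet_in[OF a(1,3)]] meet_le2[OF a(1,3)] by blast
qed

lemma GC:
  assumes b: "b \<in> L" and H: "H \<in> L" and bH: "le b H" and M: "M \<subseteq> L"
    and MK: "\<And>K. K \<in> M \<Longrightarrow> le b K \<and> le K H"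
    and i: "\<And>w. w \<in> L \<Longrightarrow> le b w \<Longrightarrow> le w H \<Longrightarrow> w = lub L le (insert b ((\<lambda>K. lmeet L le w K) ` M))"
    and ii: "\<And>y K. y \<in> (\<Pi>\<^sub>E K\<in>M. interval L le b K) \<Longrightarrow> K \<in> M \<Longrightarrow>
               lmeet L le (lub L le (insert b (y ` M))) K = y K"
  shows "bij_betw (\<lambda>y. lub L le (insert b (y ` M))) (\<Pi>\<^sub>E K\<in>M. interval L le b K) (interval L le b H) \<and>
    (\<forall>x\<in>(\<Pi>\<^sub>E K\<in>M. interval L le b K). \<forall>y\<in>(\<Pi>\<^sub>E K\<in>M. interval L le b K).
       (\<forall>K\<in>M. le (x K) (y K)) \<longleftrightarrow> le (lub L le (insert b (x ` M))) (lub L le (insert b (y ` M))))"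
proof -
  let ?P = "\<Pi>\<^sub>E K\<in>M. interval L le b K"
  let ?j = "\<lambda>y. lub L le (insert b (y ` M))"
  have yL: "insert b (y ` M) \<subseteq> L" if "y \<in> ?P" for y
    using that b by (auto simp: interval_def)
  have jL: "?j y \<in> L" if "y \<in> ?P" for y using lub_in[OF yL[OF that]] .
  have jb: "le b (?j y)" if "y \<in> ?P" for y using lub_upper[OF yL[OF that]] by blast
  have jy: "le (y K) (?j y)" if "y \<in> ?P" "K \<in> M" for y K using lub_upper[OF yL[OF that(1)]] that by blast
  have jH: "le (?j y) H" if y: "y \<in> ?P" for y
  proof (rule lub_least[OF yL[OF y] H])
    fix s assume "s \<in> insert b (y ` M)"
    then show "le s H"
    proof
      assume "s = b" then show ?thesis using bH by simp
    next
      assume "s \<in> y ` M"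
      then obtain K where K: "K \<in> M" "s = y K" by blast
      have "y K \<in> interval L le b K" using y K by blast
      then show ?thesis using K MK[OF K(1)] ltrans[of "y K" K H] M H by (auto simp: interval_def)
    qed
  qed
  have ord: "(\<forall>K\<in>M. le (x K) (y K)) \<longleftrightarrow> le (?j x) (?j y)" if x: "x \<in> ?P" and y: "y \<in> ?P" for x y
  proof
    assume a: "\<forall>K\<in>M. le (x K) (y K)"
    show "le (?j x) (?j y)"
    proof (rule lub_least[OF yL[OF x] jL[OF y]])
      fix s assume "s \<in> insert b (x ` M)"
      then show "le s (?j y)"
      proof
        assume "s = b" then show ?thesis using jb[OF y] by simp
      next
        assume "s \<in> x ` M"
        then obtain K where K: "K \<in> M" "s = x K" by blast
        have "x K \<in> L" "y K \<in> L" using x y K by (auto simp: interval_def)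
        then show ?thesis using K a ltrans[of "x K" "y K" "?j y"] jy[OF y K(1)] jL[OF y] by blast
      qed
    qed
  next
    assume a: "le (?j x) (?j y)"
    show "\<forall>K\<in>M. le (x K) (y K)"
    proof
      fix K assume K: "K \<in> M"
      have "K \<in> L" using K M by blast
      then have "le (lmeet L le (?j x) K) (lmeet L le (?j y) K)"
        using meet_mono[OF jL[OF x] jL[OF y]] a by blast
      then show "le (x K) (y K)" using ii[OF x K] ii[OF y K] by simp
    qed
  qed
  have inj: "inj_on ?j ?P"
  proof (rule inj_onI)
    fix x y assume x: "x \<in> ?P" and y: "y \<in> ?P" and e: "?j x = ?j y"
    show "x = y"
    proof (rule PiE_ext[OF x y])
      fix K assume "K \<in> M"
      then show "x K = y K" using ii[OF x] ii[OF y] e by metis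
    qed
  qed
  have img: "?j ` ?P = interval L le b H"
  proof
    show "?j ` ?P \<subseteq> interval L le b H" using jL jb jH by (auto simp: interval_def)
    show "interval L le b H \<subseteq> ?j ` ?P"
    proof
      fix w assume w: "w \<in> interval L le b H"
      then have wL: "w \<in> L" "le b w" "le w H" by (auto simp: interval_def)
      define y where "y = restrict (\<lambda>K. lmeet L le w K) M"
      have "y \<in> ?P"
        unfolding y_def
      proof (rule iffD2[OF restrict_PiE_iff], intro ballI)
        fix K assume K: "K \<in> M"
        have KL: "K \<in> L" using K M by blast
        show "lmeet L le w K \<in> interval L le b K"
          using meet_in[OF wL(1) KL] meet_greatest[OF wL(1) KL b wL(2)] MK[OF K] meet_le2[OF wL(1) KL]
          by (auto simp: interval_def)
      qed
      moreover have "?j y = w" unfolding y_def image_restrict_eq using i[OF wL] by simp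
      ultimately show "w \<in> ?j ` ?P" by force
    qed
  qed
  show ?thesis using bij_betw_imageI[OF inj img] ord by blast
qed

end

locale bs = flat +
  fixes \<G> :: "'a set"
  assumes bs: "building_set L le \<G>"
begin

abbreviation "bt \<equiv> lbot L le"
abbreviation "MM H \<equiv> maxs le {G \<in> \<G>. le G H}"
abbreviation "PP H \<equiv> \<Pi>\<^sub>E G\<in>MM H. interval L le bt G"

lemma G_sub: "\<G> \<subseteq> L" and G_nbot: "G \<in> \<G> \<Longrightarrow> G \<noteq> bt"
  using bs unfolding building_set_def by auto

lemma MM_sub: "MM H \<subseteq> \<G>" by (auto simp: maxs_def)
lemma MM_L: "MM H \<subseteq> L" using MM_sub G_sub by blast
lemma MM_le: "G \<in> MM H \<Longrightarrow> le G H" by (auto simp: maxs_def)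

lemma bs_at:
  assumes "H \<in> L" "H \<noteq> bt"
  shows "bij_betw (\<lambda>x. lub L le (x ` MM H)) (PP H) (interval L le bt H) \<and>
    (\<forall>x\<in>PP H. \<forall>y\<in>PP H. (\<forall>G\<in>MM H. le (x G) (y G)) \<longleftrightarrow> le (lub L le (x ` MM H)) (lub L le (y ` MM H)))"
  using bs assms unfolding building_set_def Let_def by blast

lemma PP_L: "x \<in> PP H \<Longrightarrow> x ` MM H \<subseteq> L"
  by (auto simp: interval_def)

lemma D2:
  assumes H: "H \<in> L" "H \<noteq> bt" and y: "y \<in> PP H" and G: "G \<in> MM H"
  shows "lmeet L le (lub L le (y ` MM H)) G = y G"
proof -
  note B = bs_at[OF H]
  let ?s = "lub L le (y ` MM H)"
  have sL: "?s \<in> L" using lub_in[OF PP_L[OF y]] .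
  have GL: "G \<in> L" using G MM_L by blast
  define z where "z = lmeet L le ?s G"
  have zL: "z \<in> L" using meet_in[OF sL GL] z_def by simp
  have zG: "le z G" using meet_le2[OF sL GL] z_def by simp
  define e where "e = restrict (\<lambda>K. if K = G then z else bt) (MM H)"
  have eP: "e \<in> PP H"
    unfolding e_def
  proof (rule iffD2[OF restrict_PiE_iff], intro ballI)
    fix K assume K: "K \<in> MM H"
    have KL: "K \<in> L" using K MM_L by blast
    show "(if K = G then z else bt) \<in> interval L le bt K"
    proof (cases "K = G")
      case True then show ?thesis using zL zG bot_le[OF zL] by (simp add: interval_def)
    next
      case False then show ?thesis using bot_in bot_le[OF KL] lrefl[OF bot_in] by (simp add: interval_def)
    qed
  qed
  have eimg: "e ` MM H \<subseteq> {z, bt}" "z \<in> e ` MM H" unfolding e_def using G by auto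
  have je: "lub L le (e ` MM H) = z"
  proof (rule lub_eq)
    show "is_lub L le (e ` MM H) z"
      unfolding is_lub_def
    proof (intro conjI ballI impI)
      show "z \<in> L" by fact
      fix s assume "s \<in> e ` MM H"
      then have "s = z \<or> s = bt" using eimg by blast
      then show "le s z" using lrefl[OF zL] bot_le[OF zL] by blast
    next
      fix w assume "w \<in> L" "\<forall>s\<in>e ` MM H. le s w"
      then show "le z w" using eimg by blast
    qed
  qed
  have "le z ?s" using meet_le1[OF sL GL] z_def by simp
  then have "le (lub L le (e ` MM H)) ?s" using je by simp
  then have "\<forall>K\<in>MM H. le (e K) (y K)" using conjunct2[OF B, rule_format, OF eP y] by blast
  then have "le z (y G)" using G unfolding e_def by auto
  moreover have "le (y G) z"
  proof -
    have yG: "y G \<in> L" "le (y G) G" using y G by (auto simp: interval_def)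
    have "le (y G) ?s" using lub_upper[OF PP_L[OF y]] G by blast
    then show ?thesis unfolding z_def using meet_greatest[OF sL GL yG(1)] yG(2) by blast
  qed
  moreover have "y G \<in> L" using y G by (auto simp: interval_def)
  ultimately show ?thesis using lantisym[OF zL] z_def by blast
qed

lemma D1:
  assumes H: "H \<in> L" "H \<noteq> bt" and w: "w \<in> L" "le w H"
  shows "w = lub L le ((\<lambda>G. lmeet L le w G) ` MM H)"
proof -
  have "w \<in> interval L le bt H" using w bot_le by (auto simp: interval_def)
  then obtain x where x: "x \<in> PP H" "w = lub L le (x ` MM H)"
    using bs_at[OF H] unfolding bij_betw_def by blast
  have "(\<lambda>G. lmeet L le w G) ` MM H = x ` MM H"
    using D2[OF H x(1)] x(2) by (auto simp: image_def)
  then show ?thesis using x by simp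
qed

lemma D3:
  assumes H: "H \<in> L" "H \<noteq> bt" and S: "S \<subseteq> L" "\<And>s. s \<in> S \<Longrightarrow> le s H" and G: "G \<in> MM H"
  shows "lmeet L le (lub L le S) G = lub L le ((\<lambda>s. lmeet L le s G) ` S)"
proof -
  define x where "x = restrict (\<lambda>G. lub L le ((\<lambda>s. lmeet L le s G) ` S)) (MM H)"
  have mS: "(\<lambda>s. lmeet L le s G') ` S \<subseteq> L" if "G' \<in> MM H" for G'
    using S(1) meet_in MM_L that by blast
  have xP: "x \<in> PP H"
    unfolding x_def
  proof (rule iffD2[OF restrict_PiE_iff], intro ballI)
    fix K assume K: "K \<in> MM H"
    have KL: "K \<in> L" using K MM_L by blast
    have "le (lub L le ((\<lambda>s. lmeet L le s K) ` S)) K"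
      using lub_least[OF mS[OF K] KL] meet_le2 S(1) KL by blast
    then show "lub L le ((\<lambda>s. lmeet L le s K) ` S) \<in> interval L le bt K"
      using lub_in[OF mS[OF K]] bot_le by (auto simp: interval_def)
  qed
  have SL: "lub L le S \<in> L" using lub_in[OF S(1)] .
  have xL: "x ` MM H \<subseteq> L" using PP_L[OF xP] .
  have jL: "lub L le (x ` MM H) \<in> L" using lub_in[OF xL] .
  have "lub L le (x ` MM H) = lub L le S"
  proof (rule lantisym[OF jL SL])
    show "le (lub L le (x ` MM H)) (lub L le S)"
    proof (rule lub_least[OF xL SL])
      fix t assume "t \<in> x ` MM H"
      then obtain K where K: "K \<in> MM H" "t = x K" by blast
      have KL: "K \<in> L" using K MM_L by blast
      have "le (lub L le ((\<lambda>s. lmeet L le s K) ` S)) (lub L le S)"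
      proof (rule lub_least[OF mS[OF K(1)] SL])
        fix u assume "u \<in> (\<lambda>s. lmeet L le s K) ` S"
        then obtain s where s: "s \<in> S" "u = lmeet L le s K" by blast
        have sL: "s \<in> L" using s S by blast
        show "le u (lub L le S)" using s ltrans[OF meet_in[OF sL KL] sL SL meet_le1[OF sL KL] lub_upper[OF S(1) s(1)]] by simp
      qed
      then show "le t (lub L le S)" using K x_def by simp
    qed
    show "le (lub L le S) (lub L le (x ` MM H))"
    proof (rule lub_least[OF S(1) jL])
      fix s assume s: "s \<in> S"
      have sL: "s \<in> L" using s S by blast
      have "le (lub L le ((\<lambda>G. lmeet L le s G) ` MM H)) (lub L le (x ` MM H))"
      proof (rule lub_least[OF _ jL])
        show "(\<lambda>G. lmeet L le s G) ` MM H \<subseteq> L" using meet_in[OF sL] MM_L by blast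
        fix u assume "u \<in> (\<lambda>G. lmeet L le s G) ` MM H"
        then obtain K where K: "K \<in> MM H" "u = lmeet L le s K" by blast
        have KL: "K \<in> L" using K MM_L by blast
        have "le u (x K)" unfolding x_def using K lub_upper[OF mS[OF K(1)]] s by auto
        moreover have "le (x K) (lub L le (x ` MM H))" using lub_upper[OF xL] K by blast
        moreover have "x K \<in> L" using xL K by blast
        ultimately show "le u (lub L le (x ` MM H))"
          using ltrans[OF _ _ jL] K meet_in[OF sL KL] by blast
      qed
      then show "le s (lub L le (x ` MM H))" using D1[OF H sL S(2)[OF s]] by simp
    qed
  qed
  then have "lmeet L le (lub L le S) G = x G" using D2[OF H xP G] by simp
  then show ?thesis using G x_def by simp
qed

lemma D4:
  assumes H: "H \<in> L" "H \<noteq> bt" and G: "G \<in> MM H" and G': "G' \<in> MM H" and ne: "G \<noteq> G'"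
  shows "lmeet L le G G' = bt"
proof -
  have GL: "G \<in> L" using G MM_L by blast
  define e where "e = restrict (\<lambda>K. if K = G then G else bt) (MM H)"
  have eP: "e \<in> PP H"
    unfolding e_def
  proof (rule iffD2[OF restrict_PiE_iff], intro ballI)
    fix K assume K: "K \<in> MM H"
    have KL: "K \<in> L" using K MM_L by blast
    show "(if K = G then G else bt) \<in> interval L le bt K"
    proof (cases "K = G")
      case True then show ?thesis using GL lrefl[OF GL] bot_le[OF GL] by (simp add: interval_def)
    next
      case False then show ?thesis using bot_in bot_le[OF KL] lrefl[OF bot_in] by (simp add: interval_def)
    qed
  qed
  have eimg: "e ` MM H \<subseteq> {G, bt}" "G \<in> e ` MM H" unfolding e_def using G by auto
  have je: "lub L le (e ` MM H) = G"
  proof (rule lub_eq)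
    show "is_lub L le (e ` MM H) G"
      unfolding is_lub_def
    proof (intro conjI ballI impI)
      show "G \<in> L" by fact
      fix s assume "s \<in> e ` MM H"
      then have "s = G \<or> s = bt" using eimg by blast
      then show "le s G" using lrefl[OF GL] bot_le[OF GL] by blast
    next
      fix w assume "w \<in> L" "\<forall>s\<in>e ` MM H. le s w"
      then show "le G w" using eimg by blast
    qed
  qed
  show ?thesis using D2[OF H eP G'] je ne unfolding e_def using G' by simp
qed

lemma X1:
  assumes H: "H \<in> L" "H \<noteq> bt" and F: "F \<in> L" "le F H" and G: "G \<in> MM H" and G': "G' \<in> MM H" and ne: "G \<noteq> G'"
  shows "le (lmeet L le (ljoin L le F G) G') F"
proof -
  have GL: "G \<in> L" "G' \<in> L" using G G' MM_L by auto
  have "lmeet L le (ljoin L le F G) G' = lub L le ((\<lambda>s. lmeet L le s G') ` {F, G})"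
    unfolding ljoin_def using D3[OF H, of "{F,G}" G'] F GL G' MM_le[OF G] by auto
  also have "\<dots> = lub L le {lmeet L le F G', bt}" using D4[OF H G G' ne] by simp
  also have "le \<dots> F"
    using lub_least[of "{lmeet L le F G', bt}" F] F meet_in[OF F(1) GL(2)] bot_in meet_le1[OF F(1) GL(2)] bot_le[OF F(1)]
    by blast
  finally show ?thesis .
qed

lemma lub_MM: assumes H: "H \<in> L" shows "lub L le (MM H) = H"
proof (cases "H = bt")
  case True
  have "MM H = {}"
  proof -
    have "{G \<in> \<G>. le G H} = {}"
      using True G_sub G_nbot lantisym[OF _ bot_in] bot_le by blast
    then show ?thesis by (auto simp: maxs_def)
  qed
  then show ?thesis using True by (simp add: lbot_def)
next
  case False
  have "(\<lambda>G. lmeet L le H G) ` MM H = MM H"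
  proof -
    have "lmeet L le H G = G" if "G \<in> MM H" for G
      using meet_eq_iff[of G H] meet_comm[of H G] MM_le[OF that] MM_L that H by auto
    then show ?thesis by (auto simp: image_def)
  qed
  then show ?thesis using D1[OF H False H lrefl[OF H]] by simp
qed


lemma restr_building:
  assumes F: "F \<in> L"
  shows "building_set (restr_L L le F) le (restr_G \<G> le F)"
proof -
  let ?R = "restr_L L le F"
  have botR: "lbot ?R le = bt" using restr_bot[OF F] .
  have sub: "restr_G \<G> le F \<subseteq> ?R - {lbot ?R le}"
    unfolding botR using G_sub G_nbot by (auto simp: restr_G_def restr_L_def)
  have key: "bij_betw (\<lambda>x. lub ?R le (x ` maxs le {G \<in> restr_G \<G> le F. le G H}))
        (\<Pi>\<^sub>E G\<in>maxs le {G \<in> restr_G \<G> le F. le G H}. interval ?R le bt G) (interval ?R le bt H) \<and>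
      (\<forall>x\<in>(\<Pi>\<^sub>E G\<in>maxs le {G \<in> restr_G \<G> le F. le G H}. interval ?R le bt G).
       \<forall>y\<in>(\<Pi>\<^sub>E G\<in>maxs le {G \<in> restr_G \<G> le F. le G H}. interval ?R le bt G).
        (\<forall>G\<in>maxs le {G \<in> restr_G \<G> le F. le G H}. le (x G) (y G)) \<longleftrightarrow>
        le (lub ?R le (x ` maxs le {G \<in> restr_G \<G> le F. le G H})) (lub ?R le (y ` maxs le {G \<in> restr_G \<G> le F. le G H})))"
    if H: "H \<in> ?R" "H \<noteq> bt" for H
  proof -
    have HL: "H \<in> L" "le H F" using H by (auto simp: restr_L_def)
    have GH: "le G F" if "G \<in> L" "le G H" for G using ltrans[OF that(1) HL(1) F that(2) HL(2)] .
    have Meq: "{G \<in> restr_G \<G> le F. le G H} = {G \<in> \<G>. le G H}"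
      using GH G_sub by (auto simp: restr_G_def)
    have IG: "interval ?R le bt G = interval L le bt G" if G: "G \<in> L" "le G H" for G
    proof -
      have "le x F" if "x \<in> L" "le x G" for x using ltrans[OF that(1) G(1) F that(2) GH[OF G]] .
      then show ?thesis unfolding interval_def restr_L_def by blast
    qed
    have PE: "(\<Pi>\<^sub>E G\<in>MM H. interval ?R le bt G) = PP H"
      by (rule PiE_cong) (use IG MM_L MM_le in blast)
    have IH: "interval ?R le bt H = interval L le bt H" using IG[OF HL(1) lrefl[OF HL(1)]] .
    have LE: "lub ?R le (x ` MM H) = lub L le (x ` MM H)" if x: "x \<in> PP H" for x
    proof (rule restr_lub[OF F])
      show "x ` MM H \<subseteq> ?R"
      proof
        fix t assume "t \<in> x ` MM H"
        then obtain G where G: "G \<in> MM H" "t = x G" by blast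
        have "x G \<in> L" "le (x G) G" using x G by (auto simp: interval_def)
        moreover have "le G H" "G \<in> L" using MM_le[OF G(1)] MM_L G by auto
        ultimately have "le (x G) H" using ltrans[OF _ _ HL(1)] by blast
        then show "t \<in> ?R" using GH \<open>x G \<in> L\<close> G by (auto simp: restr_L_def)
      qed
    qed
    note B = bs_at[OF HL(1) H(2)]
    have 1: "bij_betw (\<lambda>x. lub ?R le (x ` MM H)) (PP H) (interval L le bt H)"
      using bij_betw_cong[of "PP H" "\<lambda>x. lub ?R le (x ` MM H)" "\<lambda>x. lub L le (x ` MM H)"] LE conjunct1[OF B]
      by blast
    have 2: "\<forall>x\<in>PP H. \<forall>y\<in>PP H. (\<forall>G\<in>MM H. le (x G) (y G)) \<longleftrightarrow> le (lub ?R le (x ` MM H)) (lub ?R le (y ` MM H))"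
    proof (intro ballI)
      fix x y assume x: "x \<in> PP H" and y: "y \<in> PP H"
      show "(\<forall>G\<in>MM H. le (x G) (y G)) \<longleftrightarrow> le (lub ?R le (x ` MM H)) (lub ?R le (y ` MM H))"
        unfolding LE[OF x] LE[OF y] using conjunct2[OF B] x y by blast
    qed
    show ?thesis unfolding Meq PE IH using 1 2 by (rule conjI)
  qed
  show ?thesis unfolding building_set_def Let_def botR
  proof (intro conjI ballI impI)
    show "restr_G \<G> le F \<subseteq> ?R - {bt}" using sub botR by simp
    fix H assume "H \<in> ?R" "H \<noteq> bt"
    then show "bij_betw (\<lambda>x. lub ?R le (x ` maxs le {G \<in> restr_G \<G> le F. le G H}))
        (\<Pi>\<^sub>E G\<in>maxs le {G \<in> restr_G \<G> le F. le G H}. interval ?R le bt G) (interval ?R le bt H)"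
      using key by blast
    fix x y assume "x \<in> (\<Pi>\<^sub>E G\<in>maxs le {G \<in> restr_G \<G> le F. le G H}. interval ?R le bt G)"
       "y \<in> (\<Pi>\<^sub>E G\<in>maxs le {G \<in> restr_G \<G> le F. le G H}. interval ?R le bt G)"
    then show "(\<forall>G\<in>maxs le {G \<in> restr_G \<G> le F. le G H}. le (x G) (y G)) \<longleftrightarrow>
        le (lub ?R le (x ` maxs le {G \<in> restr_G \<G> le F. le G H})) (lub ?R le (y ` maxs le {G \<in> restr_G \<G> le F. le G H}))"
      using key[OF \<open>H \<in> ?R\<close> \<open>H \<noteq> bt\<close>] by blast
  qed
qed

lemma contr_building:
  assumes F: "F \<in> L" "F \<noteq> bt"
  shows "building_set (contr_L L le F) le (contr_G L le \<G> F)"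
proof -
  let ?C = "contr_L L le F"
  let ?GF = "contr_G L le \<G> F"
  have botC: "lbot ?C le = F" using contr_bot[OF F(1)] .
  have sub: "?GF \<subseteq> ?C - {F}"
    using G_sub join_in[OF F(1)] join_ge1[OF F(1)] by (auto simp: contr_G_def contr_L_def)
  have GFL: "?GF \<subseteq> L" using sub contr_sub by blast
  have intv: "interval ?C le F K = interval L le F K" for K
    by (auto simp: interval_def contr_L_def)
  have key: "bij_betw (\<lambda>x. lub ?C le (x ` maxs le {K \<in> ?GF. le K H}))
        (\<Pi>\<^sub>E K\<in>maxs le {K \<in> ?GF. le K H}. interval ?C le F K) (interval ?C le F H) \<and>
      (\<forall>x\<in>(\<Pi>\<^sub>E K\<in>maxs le {K \<in> ?GF. le K H}. interval ?C le F K).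
       \<forall>y\<in>(\<Pi>\<^sub>E K\<in>maxs le {K \<in> ?GF. le K H}. interval ?C le F K).
        (\<forall>K\<in>maxs le {K \<in> ?GF. le K H}. le (x K) (y K)) \<longleftrightarrow>
        le (lub ?C le (x ` maxs le {K \<in> ?GF. le K H})) (lub ?C le (y ` maxs le {K \<in> ?GF. le K H})))"
    if H: "H \<in> ?C" "H \<noteq> F" for H
  proof -
    have HL: "H \<in> L" "le F H" using H by (auto simp: contr_L_def)
    have Hbt: "H \<noteq> bt"
    proof
      assume "H = bt"
      then have "F = bt" using lantisym[OF F(1) bot_in] HL(2) bot_le[OF F(1)] by simp
      then show False using F(2) by simp
    qed
    define M0 where "M0 = {G \<in> MM H. \<not> le G F}"
    define M' where "M' = (\<lambda>G. ljoin L le F G) ` M0"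
    have M0L: "G \<in> L" "le G H" "G \<in> MM H" "\<not> le G F" if "G \<in> M0" for G
      using that MM_L MM_le unfolding M0_def by auto
    have M'props: "K \<in> L \<and> le F K \<and> le K H" if K: "K \<in> M'" for K
    proof -
      obtain G where G: "G \<in> M0" "K = ljoin L le F G" using K M'_def by blast
      show ?thesis using G M0L[OF G(1)] join_in[OF F(1)] join_ge1[OF F(1)] join_least[OF F(1) _ HL(1) HL(2)]
        by blast
    qed
    have M'L: "M' \<subseteq> L" using M'props by blast
    have Meq: "maxs le {K \<in> ?GF. le K H} = M'"
    proof (rule maxs_char)
      show "{K \<in> ?GF. le K H} \<subseteq> L" using GFL by blast
      show "M' \<subseteq> {K \<in> ?GF. le K H}"
      proof
        fix K assume K: "K \<in> M'"
        then obtain G where G: "G \<in> M0" "K = ljoin L le F G" using M'_def by blast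
        have "K \<noteq> F"
        proof
          assume "K = F"
          then have "le G F" using join_ge2[OF F(1) M0L(1)[OF G(1)]] G by simp
          then show False using M0L[OF G(1)] by blast
        qed
        moreover have "G \<in> \<G>" using M0L(3)[OF G(1)] MM_sub by blast
        ultimately have "K \<in> ?GF" using G by (auto simp: contr_G_def)
        then show "K \<in> {K \<in> ?GF. le K H}" using M'props[OF K] by blast
      qed
      show "\<exists>t\<in>M'. le K t" if K: "K \<in> {K \<in> ?GF. le K H}" for K
      proof -
        obtain G where G: "G \<in> \<G>" "K = ljoin L le F G" "K \<noteq> F" "le K H"
          using K by (auto simp: contr_G_def)
        have GL: "G \<in> L" using G G_sub by blast
        have KL: "K \<in> L" using G join_in[OF F(1) GL] by simp
        have GK: "le G K" using join_ge2[OF F(1) GL] G by simp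
        have GH: "le G H" using ltrans[OF GL KL HL(1) GK G(4)] .
        have fin': "finite {G \<in> \<G>. le G H}" using fin G_sub by (auto intro: finite_subset)
        obtain c where c: "c \<in> {G \<in> \<G>. le G H}" "le G c" "\<forall>z\<in>{G \<in> \<G>. le G H}. le c z \<longrightarrow> z = c"
          using ex_maximal[OF fin' _ , of G] G_sub G GH by blast
        have cM: "c \<in> MM H" using c by (auto simp: maxs_def)
        have cL: "c \<in> L" using c G_sub by blast
        have "\<not> le c F"
        proof
          assume "le c F"
          then have "le G F" using ltrans[OF GL cL F(1) c(2)] by blast
          then have "ljoin L le F G = F" using join_eq_iff[OF GL F(1)] join_comm by metis
          then show False using G by simp
        qed
        then have "c \<in> M0" using cM M0_def by blast
        moreover have "le K (ljoin L le F c)"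
        proof -
          have "le c (ljoin L le F c)" using join_ge2[OF F(1) cL] .
          then have "le G (ljoin L le F c)" using ltrans[OF GL cL join_in[OF F(1) cL] c(2)] by blast
          then show ?thesis using G(2) join_least[OF F(1) GL join_in[OF F(1) cL] join_ge1[OF F(1) cL]] by simp
        qed
        ultimately show ?thesis unfolding M'_def by blast
      qed
      show "t1 = t2" if t: "t1 \<in> M'" "t2 \<in> M'" "le t1 t2" for t1 t2
      proof -
        obtain G1 where G1: "G1 \<in> M0" "t1 = ljoin L le F G1" using t M'_def by blast
        obtain G2 where G2: "G2 \<in> M0" "t2 = ljoin L le F G2" using t M'_def by blast
        show ?thesis
        proof (cases "G1 = G2")
          case True then show ?thesis using G1 G2 by simp
        next
          case False
          have g1: "G1 \<in> L" using M0L[OF G1(1)] by blast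
          have t1L: "t1 \<in> L" "t2 \<in> L" using t M'props by auto
          have "le G1 t1" using join_ge2[OF F(1) g1] G1 by simp
          then have "le G1 t2" using ltrans[OF g1 t1L(1) t1L(2) _ t(3)] by blast
          then have "le G1 (lmeet L le t2 G1)" using meet_greatest[OF t1L(2) g1 g1] lrefl[OF g1] by blast
          moreover have "le (lmeet L le t2 G1) F"
            using X1[OF HL(1) Hbt F(1) HL(2) M0L(3)[OF G2(1)] M0L(3)[OF G1(1)]] False G2 by metis
          ultimately have "le G1 F" using ltrans[OF g1 meet_in[OF t1L(2) g1] F(1)] by blast
          then show ?thesis using M0L[OF G1(1)] by blast
        qed
      qed
    qed
    have GCr: "bij_betw (\<lambda>y. lub L le (insert F (y ` M'))) (\<Pi>\<^sub>E K\<in>M'. interval L le F K) (interval L le F H) \<and>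
      (\<forall>x\<in>(\<Pi>\<^sub>E K\<in>M'. interval L le F K). \<forall>y\<in>(\<Pi>\<^sub>E K\<in>M'. interval L le F K).
       (\<forall>K\<in>M'. le (x K) (y K)) \<longleftrightarrow> le (lub L le (insert F (x ` M'))) (lub L le (insert F (y ` M'))))"
    proof (rule GC[OF F(1) HL(1) HL(2) M'L])
      show "\<And>K. K \<in> M' \<Longrightarrow> le F K \<and> le K H" using M'props by blast
    next
      fix w assume w: "w \<in> L" "le F w" "le w H"
      define S where "S = insert F ((\<lambda>K. lmeet L le w K) ` M')"
      have SL: "S \<subseteq> L" unfolding S_def using F(1) meet_in[OF w(1)] M'L by blast
      have RL: "lub L le S \<in> L" using lub_in[OF SL] .
      have FR: "le F (lub L le S)" using lub_upper[OF SL] S_def by blast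
      have "le (lub L le S) w"
      proof (rule lub_least[OF SL w(1)])
        fix s assume "s \<in> S"
        then show "le s w" unfolding S_def using w(2) meet_le1[OF w(1)] M'L by blast
      qed
      moreover have "le w (lub L le S)"
      proof -
        have img: "(\<lambda>G. lmeet L le w G) ` MM H \<subseteq> L" using meet_in[OF w(1)] MM_L by blast
        have "le (lub L le ((\<lambda>G. lmeet L le w G) ` MM H)) (lub L le S)"
        proof (rule lub_least[OF img RL])
          fix u assume "u \<in> (\<lambda>G. lmeet L le w G) ` MM H"
          then obtain G where G: "G \<in> MM H" "u = lmeet L le w G" by blast
          have GL: "G \<in> L" using G MM_L by blast
          have uL: "u \<in> L" using G meet_in[OF w(1) GL] by simp
          have uG: "le u G" using G meet_le2[OF w(1) GL] by simp
          show "le u (lub L le S)"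
          proof (cases "le G F")
            case True
            have "le u F" using ltrans[OF uL GL F(1) uG True] .
            then show ?thesis using ltrans[OF uL F(1) RL _ FR] by blast
          next
            case False
            then have GM0: "G \<in> M0" using G M0_def by blast
            let ?K = "ljoin L le F G"
            have KL: "?K \<in> L" using join_in[OF F(1) GL] .
            have "le u ?K" using ltrans[OF uL GL KL uG join_ge2[OF F(1) GL]] .
            moreover have "le u w" using G meet_le1[OF w(1) GL] by simp
            ultimately have "le u (lmeet L le w ?K)" using meet_greatest[OF w(1) KL uL] by blast
            moreover have "lmeet L le w ?K \<in> S" using GM0 unfolding S_def M'_def by blast
            ultimately show ?thesis
              using ltrans[OF uL meet_in[OF w(1) KL] RL] lub_upper[OF SL] by blast
          qed
        qed
        then show ?thesis using D1[OF HL(1) Hbt w(1) w(3)] by simp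
      qed
      ultimately show "w = lub L le S" using lantisym[OF w(1) RL] by blast
    next
      fix y K0 assume y: "y \<in> (\<Pi>\<^sub>E K\<in>M'. interval L le F K)" and K0: "K0 \<in> M'"
      define S where "S = insert F (y ` M')"
      have yK: "y K \<in> L \<and> le F (y K) \<and> le (y K) K" if "K \<in> M'" for K
        using y that by (auto simp: interval_def)
      have SL: "S \<subseteq> L" unfolding S_def using F(1) yK by blast
      have SH: "le t H" if tS: "t \<in> S" for t
      proof -
        show ?thesis
        proof (cases "t = F")
          case True then show ?thesis using HL by simp
        next
          case False
          then obtain K where K: "K \<in> M'" "t = y K" using tS S_def by blast
          show ?thesis using K yK[OF K(1)] M'props[OF K(1)] ltrans[of "y K" K H] HL(1) by blast
        qed
      qed
      let ?s = "lub L le S"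
      have sL: "?s \<in> L" using lub_in[OF SL] .
      have sH: "le ?s H" using lub_least[OF SL HL(1)] SH by blast
      obtain G0 where G0: "G0 \<in> M0" "K0 = ljoin L le F G0" using K0 M'_def by blast
      have K0L: "K0 \<in> L" using M'props[OF K0] by blast
      have G0L: "G0 \<in> L" using M0L[OF G0(1)] by blast
      have y0: "y K0 \<in> L" "le F (y K0)" "le (y K0) K0" using yK[OF K0] by auto
      have "le (y K0) ?s" using lub_upper[OF SL] K0 S_def by blast
      then have ge: "le (y K0) (lmeet L le ?s K0)" using meet_greatest[OF sL K0L y0(1)] y0(3) by blast
      define w where "w = lmeet L le ?s K0"
      have wL: "w \<in> L" using meet_in[OF sL K0L] w_def by simp
      have ws: "le w ?s" using meet_le1[OF sL K0L] w_def by simp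
      have wK: "le w K0" using meet_le2[OF sL K0L] w_def by simp
      have wH: "le w H" using ltrans[OF wL sL HL(1) ws sH] .
      have img: "(\<lambda>G. lmeet L le w G) ` MM H \<subseteq> L" using meet_in[OF wL] MM_L by blast
      have FyK0: "le u (y K0)" if "u \<in> L" "le u F" for u using ltrans[OF that(1) F(1) y0(1) that(2) y0(2)] .
      have "le (lub L le ((\<lambda>G. lmeet L le w G) ` MM H)) (y K0)"
      proof (rule lub_least[OF img y0(1)])
        fix u assume "u \<in> (\<lambda>G. lmeet L le w G) ` MM H"
        then obtain G' where G': "G' \<in> MM H" "u = lmeet L le w G'" by blast
        have G'L: "G' \<in> L" using G' MM_L by blast
        have uL: "u \<in> L" using G' meet_in[OF wL G'L] by simp
        show "le u (y K0)"
        proof (cases "G' = G0")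
          case True
          have "le u (lmeet L le ?s G0)" using G' True meet_mono[OF wL sL G0L ws] by simp
          moreover have "lmeet L le ?s G0 = lub L le ((\<lambda>t. lmeet L le t G0) ` S)"
            using D3[OF HL(1) Hbt SL SH M0L(3)[OF G0(1)]] .
          moreover have "le (lub L le ((\<lambda>t. lmeet L le t G0) ` S)) (y K0)"
          proof (rule lub_least[OF _ y0(1)])
            show "(\<lambda>t. lmeet L le t G0) ` S \<subseteq> L" using meet_in[OF _ G0L] SL by blast
            fix v assume "v \<in> (\<lambda>t. lmeet L le t G0) ` S"
            then obtain t where t: "t \<in> S" "v = lmeet L le t G0" by blast
            have tL: "t \<in> L" using t SL by blast
            have vL: "v \<in> L" using t meet_in[OF tL G0L] by simp
            show "le v (y K0)"
            proof (cases "t = F")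
              case True
              then show ?thesis using t FyK0[OF vL] meet_le1[OF F(1) G0L] by simp
            next
              case False
              then obtain K where K: "K \<in> M'" "t = y K" using t S_def by blast
              obtain G where G: "G \<in> M0" "K = ljoin L le F G" using K M'_def by blast
              show ?thesis
              proof (cases "G = G0")
                case True
                then have "t = y K0" using K G G0 by simp
                then show ?thesis using t meet_le1[OF y0(1) G0L] by simp
              next
                case False
                have KL: "K \<in> L" using M'props[OF K(1)] by blast
                have "le v (lmeet L le K G0)" using t K meet_mono[OF tL KL G0L] yK[OF K(1)] by simp
                moreover have "le (lmeet L le K G0) F"
                  using X1[OF HL(1) Hbt F(1) HL(2) M0L(3)[OF G(1)] M0L(3)[OF G0(1)] False] G by simp
                ultimately have "le v F" using ltrans[OF vL meet_in[OF KL G0L] F(1)] by blast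
                then show ?thesis using FyK0[OF vL] by blast
              qed
            qed
          qed
          ultimately show ?thesis
            using ltrans[OF uL meet_in[OF sL G0L] y0(1)] by simp
        next
          case False
          have "le u (lmeet L le K0 G')" using G' meet_mono[OF wL K0L G'L wK] by simp
          moreover have "le (lmeet L le K0 G') F"
            using X1[OF HL(1) Hbt F(1) HL(2) M0L(3)[OF G0(1)] G'(1)] False G0 by metis
          ultimately have "le u F" using ltrans[OF uL meet_in[OF K0L G'L] F(1)] by blast
          then show ?thesis using FyK0[OF uL] by blast
        qed
      qed
      then have "le w (y K0)" using D1[OF HL(1) Hbt wL wH] by simp
      then show "lmeet L le (lub L le (insert F (y ` M'))) K0 = y K0"
        using lantisym[OF wL y0(1)] ge w_def S_def by simp
    qed
    have PE: "(\<Pi>\<^sub>E K\<in>M'. interval ?C le F K) = (\<Pi>\<^sub>E K\<in>M'. interval L le F K)" using intv by simp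
    have LE: "lub ?C le (x ` M') = lub L le (insert F (x ` M'))" if x: "x \<in> (\<Pi>\<^sub>E K\<in>M'. interval L le F K)" for x
      by (rule contr_lub[OF F(1)]) (use x in \<open>auto simp: interval_def contr_L_def\<close>)
    let ?P = "\<Pi>\<^sub>E K\<in>M'. interval L le F K"
    have 1: "bij_betw (\<lambda>x. lub ?C le (x ` M')) ?P (interval L le F H)"
      using bij_betw_cong[of ?P "\<lambda>x. lub ?C le (x ` M')" "\<lambda>x. lub L le (insert F (x ` M'))"] LE conjunct1[OF GCr]
      by blast
    have 2: "\<forall>x\<in>?P. \<forall>y\<in>?P. (\<forall>K\<in>M'. le (x K) (y K)) \<longleftrightarrow> le (lub ?C le (x ` M')) (lub ?C le (y ` M'))"
    proof (intro ballI)
      fix x y assume x: "x \<in> ?P" and y: "y \<in> ?P"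
      show "(\<forall>K\<in>M'. le (x K) (y K)) \<longleftrightarrow> le (lub ?C le (x ` M')) (lub ?C le (y ` M'))"
        unfolding LE[OF x] LE[OF y] using conjunct2[OF GCr] x y by blast
    qed
    show ?thesis unfolding Meq PE intv using 1 2 by (rule conjI)
  qed
  show ?thesis unfolding building_set_def Let_def botC
  proof (intro conjI ballI impI)
    show "?GF \<subseteq> ?C - {F}" using sub by simp
    fix H assume "H \<in> ?C" "H \<noteq> F"
    then show "bij_betw (\<lambda>x. lub ?C le (x ` maxs le {K \<in> ?GF. le K H}))
        (\<Pi>\<^sub>E K\<in>maxs le {K \<in> ?GF. le K H}. interval ?C le F K) (interval ?C le F H)"
      using key by blast
    fix x y assume "x \<in> (\<Pi>\<^sub>E K\<in>maxs le {K \<in> ?GF. le K H}. interval ?C le F K)"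
       "y \<in> (\<Pi>\<^sub>E K\<in>maxs le {K \<in> ?GF. le K H}. interval ?C le F K)"
    then show "(\<forall>K\<in>maxs le {K \<in> ?GF. le K H}. le (x K) (y K)) \<longleftrightarrow>
        le (lub ?C le (x ` maxs le {K \<in> ?GF. le K H})) (lub ?C le (y ` maxs le {K \<in> ?GF. le K H}))"
      using key[OF \<open>H \<in> ?C\<close> \<open>H \<noteq> F\<close>] by blast
  qed
qed


lemma join_mono: "F \<in> L \<Longrightarrow> x \<in> L \<Longrightarrow> y \<in> L \<Longrightarrow> le x y \<Longrightarrow> le (ljoin L le F x) (ljoin L le F y)"
proof -
  assume a: "F \<in> L" "x \<in> L" "y \<in> L" "le x y"
  have "le x (ljoin L le F y)" using ltrans[OF a(2,3) join_in[OF a(1,3)] a(4) join_ge2[OF a(1,3)]] .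
  then show ?thesis using join_least[OF a(1,2) join_in[OF a(1,3)] join_ge1[OF a(1,3)]] by blast
qed

lemma GF_repr:
  assumes F: "F \<in> L" and K: "K \<in> contr_G L le \<G> F"
  shows "\<exists>G\<in>MM K. ljoin L le F G = K"
proof -
  obtain G' where G': "G' \<in> \<G>" "K = ljoin L le F G'" using K by (auto simp: contr_G_def)
  have G'L: "G' \<in> L" using G' G_sub by blast
  have KL: "K \<in> L" using join_in[OF F G'L] G' by simp
  have G'K: "le G' K" using join_ge2[OF F G'L] G' by simp
  have fin': "finite {G \<in> \<G>. le G K}" using fin G_sub by (auto intro: finite_subset)
  obtain c where c: "c \<in> {G \<in> \<G>. le G K}" "le G' c" "\<forall>z\<in>{G \<in> \<G>. le G K}. le c z \<longrightarrow> z = c"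
    using ex_maximal[OF fin' _ , of G'] G_sub G' G'K by blast
  have cM: "c \<in> MM K" using c by (auto simp: maxs_def)
  have cL: "c \<in> L" using c G_sub by blast
  have "ljoin L le F c = K"
  proof (rule lantisym[OF join_in[OF F cL] KL])
    have "le F K" using join_ge1[OF F G'L] G' by simp
    then show "le (ljoin L le F c) K" using join_least[OF F cL KL] c by blast
    show "le K (ljoin L le F c)" using join_mono[OF F G'L cL c(2)] G' by simp
  qed
  then show ?thesis using cM by blast
qed

lemma nested_restr:
  assumes F: "F \<in> L" and S: "S \<subseteq> restr_G \<G> le F"
  shows "nested (restr_L L le F) le (restr_G \<G> le F) S \<longleftrightarrow> nested L le \<G> S"
proof -
  have SR: "S \<subseteq> restr_L L le F" using S G_sub by (auto simp: restr_G_def restr_L_def)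
  have SG: "S \<subseteq> \<G>" using S by (auto simp: restr_G_def)
  have eq: "lub (restr_L L le F) le T \<notin> restr_G \<G> le F \<longleftrightarrow> lub L le T \<notin> \<G>" if T: "T \<subseteq> S" for T
  proof -
    have TR: "T \<subseteq> restr_L L le F" using T SR by blast
    have TL: "T \<subseteq> L" using TR restr_sub by blast
    have "le (lub L le T) F" using lub_least[OF TL F] TR by (auto simp: restr_L_def)
    then show ?thesis using restr_lub[OF F TR] by (auto simp: restr_G_def)
  qed
  show ?thesis unfolding nested_def
  proof
    assume h: "S \<subseteq> restr_G \<G> le F \<and> (\<forall>A\<subseteq>S. antichain_on le A \<longrightarrow>
        (\<forall>T\<subseteq>A. finite T \<and> 2 \<le> card T \<longrightarrow> lub (restr_L L le F) le T \<notin> restr_G \<G> le F))"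
    show "S \<subseteq> \<G> \<and> (\<forall>A\<subseteq>S. antichain_on le A \<longrightarrow> (\<forall>T\<subseteq>A. finite T \<and> 2 \<le> card T \<longrightarrow> lub L le T \<notin> \<G>))"
    proof (intro conjI allI impI)
      show "S \<subseteq> \<G>" by fact
      fix A T assume a: "A \<subseteq> S" "antichain_on le A" "T \<subseteq> A" "finite T \<and> 2 \<le> card T"
      have "lub (restr_L L le F) le T \<notin> restr_G \<G> le F" using h a by blast
      then show "lub L le T \<notin> \<G>" using eq[of T] a by blast
    qed
  next
    assume h: "S \<subseteq> \<G> \<and> (\<forall>A\<subseteq>S. antichain_on le A \<longrightarrow> (\<forall>T\<subseteq>A. finite T \<and> 2 \<le> card T \<longrightarrow> lub L le T \<notin> \<G>))"
    show "S \<subseteq> restr_G \<G> le F \<and> (\<forall>A\<subseteq>S. antichain_on le A \<longrightarrow>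
        (\<forall>T\<subseteq>A. finite T \<and> 2 \<le> card T \<longrightarrow> lub (restr_L L le F) le T \<notin> restr_G \<G> le F))"
    proof (intro conjI allI impI)
      show "S \<subseteq> restr_G \<G> le F" by fact
      fix A T assume a: "A \<subseteq> S" "antichain_on le A" "T \<subseteq> A" "finite T \<and> 2 \<le> card T"
      have "lub L le T \<notin> \<G>" using h a by blast
      then show "lub (restr_L L le F) le T \<notin> restr_G \<G> le F" using eq[of T] a by blast
    qed
  qed
qed

lemma restr_flag:
  assumes F: "F \<in> L" and fl: "flag_built L le \<G>"
  shows "flag_built (restr_L L le F) le (restr_G \<G> le F)"
  unfolding flag_built_def
proof (intro allI impI)
  let ?R = "restr_L L le F" and ?GR = "restr_G \<G> le F"
  fix N assume N: "N \<subseteq> ?GR - maxs le ?GR \<and> N \<notin> nested_complex ?R le ?GR \<and>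
      (\<forall>N'. N' \<subset> N \<longrightarrow> N' \<in> nested_complex ?R le ?GR)"
  have V: "?GR - maxs le ?GR \<subseteq> \<G> - maxs le \<G>"
  proof
    fix x assume x: "x \<in> ?GR - maxs le ?GR"
    then obtain y where "y \<in> ?GR" "le x y" "y \<noteq> x" by (auto simp: maxs_def)
    then show "x \<in> \<G> - maxs le \<G>" using x by (auto simp: maxs_def restr_G_def)
  qed
  have eqc: "N' \<in> nested_complex ?R le ?GR \<longleftrightarrow> N' \<in> nested_complex L le \<G>" if "N' \<subseteq> N" for N'
  proof -
    have "N' \<subseteq> ?GR - maxs le ?GR" using that N by blast
    then show ?thesis unfolding nested_complex_def using V nested_restr[OF F] by blast
  qed
  have "N \<subseteq> \<G> - maxs le \<G>" using N V by blast
  moreover have "N \<notin> nested_complex L le \<G>" using N eqc by blast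
  moreover have "\<forall>N'. N' \<subset> N \<longrightarrow> N' \<in> nested_complex L le \<G>" using N eqc by blast
  ultimately show "card N = 2" using fl unfolding flag_built_def by blast
qed

lemma flag_pair:
  assumes fl: "flag_built L le \<G>" and T: "T \<subseteq> \<G> - maxs le \<G>" and nn: "\<not> nested L le \<G> T"
  shows "\<exists>u v. u \<in> T \<and> v \<in> T \<and> u \<noteq> v \<and> lub L le {u, v} \<in> \<G>"
proof -
  have finT: "finite T" using T G_sub fin by (auto intro: finite_subset)
  let ?P = "\<lambda>N. N \<subseteq> T \<and> N \<notin> nested_complex L le \<G>"
  have PT: "?P T" using T nn by (auto simp: nested_complex_def)
  define N where "N = arg_min card ?P"
  have N: "?P N" "\<And>N'. ?P N' \<Longrightarrow> card N \<le> card N'"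
    using arg_min_nat_lemma[of ?P T card] PT N_def by auto
  have finN: "finite N" using N finT finite_subset by blast
  have sub: "N' \<in> nested_complex L le \<G>" if "N' \<subset> N" for N'
  proof (rule ccontr)
    assume "N' \<notin> nested_complex L le \<G>"
    then have "?P N'" using that N by blast
    then have "card N \<le> card N'" using N by blast
    moreover have "card N' < card N" using psubset_card_mono[OF finN that] .
    ultimately show False by simp
  qed
  have NV: "N \<subseteq> \<G> - maxs le \<G>" using N T by blast
  have "N \<subseteq> \<G> - maxs le \<G> \<and> N \<notin> nested_complex L le \<G> \<and> (\<forall>N'. N' \<subset> N \<longrightarrow> N' \<in> nested_complex L le \<G>)"
    using NV N sub by blast
  then have c2: "card N = 2" using fl unfolding flag_built_def by blast
  have nN: "\<not> nested L le \<G> N" using N NV by (auto simp: nested_complex_def)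
  have NG: "N \<subseteq> \<G>" using NV by blast
  have "\<exists>A. A \<subseteq> N \<and> antichain_on le A \<and> (\<exists>T'. T' \<subseteq> A \<and> finite T' \<and> 2 \<le> card T' \<and> lub L le T' \<in> \<G>)"
  proof (rule ccontr)
    assume h: "\<not> (\<exists>A. A \<subseteq> N \<and> antichain_on le A \<and> (\<exists>T'. T' \<subseteq> A \<and> finite T' \<and> 2 \<le> card T' \<and> lub L le T' \<in> \<G>))"
    have "\<forall>A\<subseteq>N. antichain_on le A \<longrightarrow> (\<forall>T\<subseteq>A. finite T \<and> 2 \<le> card T \<longrightarrow> lub L le T \<notin> \<G>)"
    proof (intro allI impI)
      fix A T assume "A \<subseteq> N" "antichain_on le A" "T \<subseteq> A" "finite T \<and> 2 \<le> card T"
      then show "lub L le T \<notin> \<G>" using h by blast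
    qed
    then have "nested L le \<G> N" unfolding nested_def using NG by blast
    then show False using nN by contradiction
  qed
  then obtain A T' where A: "A \<subseteq> N" "antichain_on le A" "T' \<subseteq> A" "finite T'" "card T' \<ge> 2" "lub L le T' \<in> \<G>"
    by auto
  have TN: "T' \<subseteq> N" using A by blast
  have "card T' \<le> card N" using card_mono[OF finN TN] .
  then have "card T' = card N" using A(5) c2 by simp
  then have "T' = N" using card_subset_eq[OF finN TN] by blast
  obtain u v where uv: "N = {u, v}" "u \<noteq> v" using c2 unfolding card_2_iff by blast
  have "lub L le {u, v} \<in> \<G>" using A(6) \<open>T' = N\<close> uv(1) by simp
  moreover have "u \<in> T" "v \<in> T" using N(1) uv(1) by auto
  ultimately show ?thesis using uv(2) by blast
qed

end
context bs begin
lemma contr_flag: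
  assumes F: "F \<in> L" "F \<noteq> bt" and fl: "flag_built L le \<G>"
  shows "flag_built (contr_L L le F) le (contr_G L le \<G> F)"
  unfolding flag_built_def
proof (intro allI impI)
  let ?C = "contr_L L le F" and ?GF = "contr_G L le \<G> F"
  fix N assume N: "N \<subseteq> ?GF - maxs le ?GF \<and> N \<notin> nested_complex ?C le ?GF \<and>
      (\<forall>N'. N' \<subset> N \<longrightarrow> N' \<in> nested_complex ?C le ?GF)"
  have NGF: "N \<subseteq> ?GF" using N by blast
  have GFC: "?GF \<subseteq> ?C"
    using G_sub join_in[OF F(1)] join_ge1[OF F(1)] by (auto simp: contr_G_def contr_L_def)
  have GFnF: "F \<notin> ?GF" by (auto simp: contr_G_def)
  have NC: "N \<subseteq> ?C" using NGF GFC by blast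
  have NL: "N \<subseteq> L" using NC contr_sub by blast
  have finN: "finite N" using NL fin finite_subset by blast
  have KF: "le F K" if "K \<in> N" for K using that NC by (auto simp: contr_L_def)
  have KnF: "K \<noteq> F" if "K \<in> N" for K using that NGF GFnF by blast
  have nN: "\<not> nested ?C le ?GF N" using N by (auto simp: nested_complex_def)
  have "\<exists>A. A \<subseteq> N \<and> antichain_on le A \<and> (\<exists>T'. T' \<subseteq> A \<and> finite T' \<and> 2 \<le> card T' \<and> lub ?C le T' \<in> ?GF)"
  proof (rule ccontr)
    assume h: "\<not> (\<exists>A. A \<subseteq> N \<and> antichain_on le A \<and> (\<exists>T'. T' \<subseteq> A \<and> finite T' \<and> 2 \<le> card T' \<and> lub ?C le T' \<in> ?GF))"
    have "\<forall>A\<subseteq>N. antichain_on le A \<longrightarrow> (\<forall>T\<subseteq>A. finite T \<and> 2 \<le> card T \<longrightarrow> lub ?C le T \<notin> ?GF)"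
    proof (intro allI impI)
      fix A T assume "A \<subseteq> N" "antichain_on le A" "T \<subseteq> A" "finite T \<and> 2 \<le> card T"
      then show "lub ?C le T \<notin> ?GF" using h by blast
    qed
    then have "nested ?C le ?GF N" unfolding nested_def using NGF by blast
    then show False using nN by contradiction
  qed
  then obtain A T where A: "A \<subseteq> N" "antichain_on le A" "T \<subseteq> A" "finite T" "2 \<le> card T" "lub ?C le T \<in> ?GF"
    by auto
  have acT: "antichain_on le T" using A(2,3) unfolding antichain_on_def by blast
  have TN: "T = N"
  proof (rule ccontr)
    assume "T \<noteq> N"
    then have "T \<subset> N" using A by blast
    then have "T \<in> nested_complex ?C le ?GF" using N by blast
    then have "nested ?C le ?GF T" by (simp add: nested_complex_def)
    then have "\<forall>A\<subseteq>T. antichain_on le A \<longrightarrow> (\<forall>T'\<subseteq>A. finite T' \<and> 2 \<le> card T' \<longrightarrow> lub ?C le T' \<notin> ?GF)"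
      unfolding nested_def by blast
    then have "lub ?C le T \<notin> ?GF" using acT A(4,5) by blast
    then show False using A(6) by contradiction
  qed
  have acN: "antichain_on le N" using acT TN by simp
  have XGF: "lub ?C le N \<in> ?GF" using A(6) TN by simp
  show "card N = 2"
  proof (rule ccontr)
    assume "card N \<noteq> 2"
    then have c3: "card N \<ge> 3" using A(5) TN by simp
    have pairs: "lub ?C le {K1, K2} \<notin> ?GF" if K: "K1 \<in> N" "K2 \<in> N" "K1 \<noteq> K2" for K1 K2
    proof -
      have sub: "{K1, K2} \<subseteq> N" using K by blast
      have c2: "card {K1, K2} = 2" using K(3) by simp
      have "{K1, K2} \<noteq> N" using c2 c3 by auto
      then have "{K1, K2} \<subset> N" using sub by blast
      then have "{K1, K2} \<in> nested_complex ?C le ?GF" using N by blast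
      then have "nested ?C le ?GF {K1, K2}" by (simp add: nested_complex_def)
      then have h: "\<forall>A\<subseteq>{K1, K2}. antichain_on le A \<longrightarrow> (\<forall>T'\<subseteq>A. finite T' \<and> 2 \<le> card T' \<longrightarrow> lub ?C le T' \<notin> ?GF)"
        unfolding nested_def by blast
      have "antichain_on le {K1, K2}" using acN sub unfolding antichain_on_def by blast
      from h[rule_format, OF subset_refl this subset_refl] c2 show ?thesis by simp
    qed
    define X where "X = lub ?C le N"
    have Xeq: "X = lub L le (insert F N)" using contr_lub[OF F(1) NC] X_def by simp
    have iFN: "insert F N \<subseteq> L" using NL F(1) by blast
    have XL: "X \<in> L" using lub_in[OF iFN] Xeq by simp
    have FX: "le F X" using lub_upper[OF iFN] Xeq by simp
    have KX: "le K X" if "K \<in> N" for K using lub_upper[OF iFN] Xeq that by simp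
    have XnF: "X \<noteq> F" using XGF GFnF X_def by auto
    have Xbt: "X \<noteq> bt"
    proof
      assume "X = bt"
      then have "F = bt" using lantisym[OF F(1) bot_in] FX bot_le[OF F(1)] by simp
      then show False using F(2) by simp
    qed
    obtain G0 where G0: "G0 \<in> MM X" "ljoin L le F G0 = X" using GF_repr[OF F(1)] XGF X_def by blast
    have G0L: "G0 \<in> L" "G0 \<in> \<G>" "le G0 X" using G0 MM_L MM_sub MM_le by auto
    define g where "g = (\<lambda>K. SOME G. G \<in> MM K \<and> ljoin L le F G = K)"
    have gK: "g K \<in> MM K \<and> ljoin L le F (g K) = K" if "K \<in> N" for K
    proof -
      have "\<exists>G. G \<in> MM K \<and> ljoin L le F G = K" using GF_repr[OF F(1)] NGF that by blast
      then show ?thesis unfolding g_def by (rule someI_ex)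
    qed
    have gP: "g K \<in> \<G> \<and> g K \<in> L \<and> le (g K) K \<and> \<not> le (g K) F" if K: "K \<in> N" for K
    proof -
      have 1: "g K \<in> \<G>" "g K \<in> L" "le (g K) K" using gK[OF K] MM_sub MM_L MM_le by auto
      have "\<not> le (g K) F"
      proof
        assume "le (g K) F"
        then have "ljoin L le F (g K) = F" using join_eq_iff[OF 1(2) F(1)] join_comm by metis
        then show False using gK[OF K] KnF[OF K] by simp
      qed
      then show ?thesis using 1 by blast
    qed
    have KL: "K \<in> L" if "K \<in> N" for K using that NL by blast
    have gG0: "le (g K) G0 \<and> g K \<noteq> G0" if K: "K \<in> N" for K
    proof -
      have gL: "g K \<in> L" using gP[OF K] by blast
      have gX: "le (g K) X" using ltrans[OF gL KL[OF K] XL] gP[OF K] KX[OF K] by blast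
      have fin': "finite {G \<in> \<G>. le G X}" using fin G_sub by (auto intro: finite_subset)
      obtain Hm where Hm: "Hm \<in> {G \<in> \<G>. le G X}" "le (g K) Hm" "\<forall>z\<in>{G \<in> \<G>. le G X}. le Hm z \<longrightarrow> z = Hm"
        using ex_maximal[OF fin' _ , of "g K"] G_sub gP[OF K] gX by blast
      have HmM: "Hm \<in> MM X" using Hm by (auto simp: maxs_def)
      have HmL: "Hm \<in> L" using HmM MM_L by blast
      have "Hm = G0"
      proof (rule ccontr)
        assume ne: "Hm \<noteq> G0"
        have "le (lmeet L le (ljoin L le F G0) Hm) F"
          using X1[OF XL Xbt F(1) FX G0(1) HmM] ne by metis
        moreover have "lmeet L le X Hm = Hm"
          using meet_eq_iff[OF HmL XL] meet_comm MM_le[OF HmM] by metis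
        ultimately have "le Hm F" using G0(2) by simp
        then have "le (g K) F" using ltrans[OF gL HmL F(1) Hm(2)] by blast
        then show False using gP[OF K] by blast
      qed
      then have "le (g K) G0" using Hm by simp
      moreover have "g K \<noteq> G0"
      proof
        assume "g K = G0"
        then have KXe: "K = X" using gK[OF K] G0(2) by simp
        have "card (N - {K}) \<ge> 2" using card_Diff_singleton[OF K] c3 by simp
        then have "N - {K} \<noteq> {}" by (metis card.empty not_numeral_le_zero)
        then obtain K' where K': "K' \<in> N" "K' \<noteq> K" by blast
        have "le K' K" using KX[OF K'(1)] KXe by simp
        then show False using acN K K' unfolding antichain_on_def by blast
      qed
      ultimately show ?thesis by blast
    qed
    define F' where "F' = lmeet L le F G0"
    have F'L: "F' \<in> L" using meet_in[OF F(1) G0L(1)] F'_def by simp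
    have F'F: "le F' F" using meet_le1[OF F(1) G0L(1)] F'_def by simp
    have F'G0: "le F' G0" using meet_le2[OF F(1) G0L(1)] F'_def by simp
    define B where "B = MM F'"
    have lubB: "lub L le B = F'" using lub_MM[OF F'L] B_def by simp
    have BL: "b \<in> L" "b \<in> \<G>" "le b F'" if "b \<in> B" for b using that B_def MM_L MM_sub MM_le by auto
    define B' where "B' = {b \<in> B. \<forall>K\<in>N. \<not> le b (g K)}"
    define T0 where "T0 = g ` N \<union> B'"
    have G0nF: "\<not> le G0 F"
    proof
      assume "le G0 F"
      then have "ljoin L le F G0 = F" using join_eq_iff[OF G0L(1) F(1)] join_comm by metis
      then show False using G0(2) XnF by simp
    qed
    have bG0: "le b G0 \<and> b \<noteq> G0" if b: "b \<in> B" for b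
    proof -
      have "le b G0" using ltrans[OF BL(1)[OF b] F'L G0L(1) BL(3)[OF b] F'G0] .
      moreover have "b \<noteq> G0"
      proof
        assume "b = G0"
        then have "le G0 F" using ltrans[OF G0L(1) F'L F(1) _ F'F] BL(3)[OF b] by simp
        then show False using G0nF by blast
      qed
      ultimately show ?thesis by blast
    qed
    have T0L: "T0 \<subseteq> L" unfolding T0_def B'_def using gP BL by blast
    have finT0: "finite T0" using T0L fin finite_subset by blast
    have T0V: "T0 \<subseteq> \<G> - maxs le \<G>"
    proof
      fix t assume t: "t \<in> T0"
      have "t \<in> \<G> \<and> le t G0 \<and> t \<noteq> G0"
      proof (cases "t \<in> g ` N")
        case True
        then obtain K where "K \<in> N" "t = g K" by blast
        then show ?thesis using gP gG0 by blast
      next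
        case False
        then have "t \<in> B" using t T0_def B'_def by blast
        then show ?thesis using BL bG0 by blast
      qed
      then show "t \<in> \<G> - maxs le \<G>" using G0L(2) by (auto simp: maxs_def)
    qed
    have ginj: "inj_on g N"
    proof (rule inj_onI)
      fix K1 K2 assume "K1 \<in> N" "K2 \<in> N" "g K1 = g K2"
      then show "K1 = K2" using gK by metis
    qed
    have T0ac: "antichain_on le T0"
      unfolding antichain_on_def
    proof (intro ballI impI)
      fix x y assume x: "x \<in> T0" and y: "y \<in> T0" and xy: "le x y"
      show "x = y"
      proof (cases "x \<in> g ` N")
        case True
        then obtain K1 where K1: "K1 \<in> N" "x = g K1" by blast
        show ?thesis
        proof (cases "y \<in> g ` N")
          case True
          then obtain K2 where K2: "K2 \<in> N" "y = g K2" by blast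
          have "le K1 K2"
            using join_mono[OF F(1) _ _ xy] gP[OF K1(1)] gP[OF K2(1)] gK[OF K1(1)] gK[OF K2(1)] K1 K2 by simp
          then have "K1 = K2" using acN K1 K2 unfolding antichain_on_def by blast
          then show ?thesis using K1 K2 by simp
        next
          case False
          then have yB: "y \<in> B" using y T0_def B'_def by blast
          have "le x F" using ltrans[OF _ BL(1)[OF yB] F'L xy BL(3)[OF yB]] gP[OF K1(1)] K1
              ltrans[OF _ F'L F(1) _ F'F] by blast
          then show ?thesis using gP[OF K1(1)] K1 by blast
        qed
      next
        case False
        then have xB: "x \<in> B'" using x T0_def by blast
        show ?thesis
        proof (cases "y \<in> g ` N")
          case True
          then obtain K2 where K2: "K2 \<in> N" "y = g K2" by blast
          then show ?thesis using xB xy B'_def by blast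
        next
          case False
          then have yB: "y \<in> B" using y T0_def B'_def by blast
          have "x \<in> B" using xB B'_def by blast
          then show ?thesis using yB xy unfolding B_def maxs_def by blast
        qed
      qed
    qed
    have cT0: "2 \<le> card T0"
    proof -
      have "card (g ` N) = card N" using card_image[OF ginj] .
      moreover have "card (g ` N) \<le> card T0" using card_mono[OF finT0] T0_def by blast
      ultimately show ?thesis using c3 by simp
    qed
    have Xeq2: "X = lub L le (insert F (g ` N))"
    proof -
      have S: "insert F (g ` N) \<subseteq> L" using F(1) gP by blast
      have "is_lub L le (insert F (g ` N)) X"
        unfolding is_lub_def
      proof (intro conjI ballI impI)
        show "X \<in> L" by fact
        fix s assume "s \<in> insert F (g ` N)"
        then show "le s X"
        proof
          assume "s = F" then show ?thesis using FX by simp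
        next
          assume "s \<in> g ` N"
          then obtain K where K: "K \<in> N" "s = g K" by blast
          then show ?thesis using ltrans[OF _ KL[OF K(1)] XL _ KX[OF K(1)]] gP[OF K(1)] by blast
        qed
      next
        fix w assume w: "w \<in> L" "\<forall>s\<in>insert F (g ` N). le s w"
        have "le K w" if K: "K \<in> N" for K
        proof -
          have "le (ljoin L le F (g K)) w" using join_least[OF F(1) _ w(1)] gP[OF K] w(2) K by blast
          then show ?thesis using gK[OF K] by simp
        qed
        then show "le X w" using lub_least[OF iFN w(1)] Xeq w(2) by auto
      qed
      then show ?thesis using lub_eq by simp
    qed
    have lubT0: "lub L le T0 = G0"
    proof (rule lub_eq)
      show "is_lub L le T0 G0"
        unfolding is_lub_def
      proof (intro conjI ballI impI)
        show "G0 \<in> L" by fact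
        fix t assume "t \<in> T0"
        then show "le t G0"
        proof (cases "t \<in> g ` N")
          case True then show ?thesis using gG0 by blast
        next
          case False then show ?thesis using \<open>t \<in> T0\<close> T0_def B'_def bG0 by blast
        qed
      next
        fix z assume z: "z \<in> L" "\<forall>t\<in>T0. le t z"
        have S: "insert F (g ` N) \<subseteq> L" using F(1) gP by blast
        have SX: "le s X" if "s \<in> insert F (g ` N)" for s
          using that Xeq2 lub_upper[OF S] by simp
        have "lmeet L le X G0 = lub L le ((\<lambda>s. lmeet L le s G0) ` insert F (g ` N))"
          using D3[OF XL Xbt S SX G0(1)] Xeq2 by simp
        moreover have "lmeet L le X G0 = G0" using meet_eq_iff[OF G0L(1) XL] meet_comm G0L(3) by metis
        moreover have "le (lub L le ((\<lambda>s. lmeet L le s G0) ` insert F (g ` N))) z"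
        proof (rule lub_least[OF _ z(1)])
          show "(\<lambda>s. lmeet L le s G0) ` insert F (g ` N) \<subseteq> L" using meet_in[OF _ G0L(1)] S by blast
          fix u assume "u \<in> (\<lambda>s. lmeet L le s G0) ` insert F (g ` N)"
          then obtain s where s: "s \<in> insert F (g ` N)" "u = lmeet L le s G0" by blast
          show "le u z"
          proof (cases "s = F")
            case True
            have "le (lub L le B) z"
            proof (rule lub_least[OF _ z(1)])
              show "B \<subseteq> L" using BL by blast
              fix b assume b: "b \<in> B"
              show "le b z"
              proof (cases "b \<in> B'")
                case True then show ?thesis using z T0_def by blast
              next
                case False
                then obtain K where K: "K \<in> N" "le b (g K)" using b B'_def by blast
                have "le (g K) z" using z T0_def K by blast
                then show ?thesis using ltrans[OF BL(1)[OF b] _ z(1) K(2)] gP[OF K(1)] by blast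
              qed
            qed
            then show ?thesis using True s lubB F'_def by simp
          next
            case False
            then obtain K where K: "K \<in> N" "s = g K" using s by blast
            have gL: "g K \<in> L" using gP[OF K(1)] by blast
            have "le (g K) z" using z T0_def K by blast
            then show ?thesis using ltrans[OF meet_in[OF gL G0L(1)] gL z(1) meet_le1[OF gL G0L(1)]] s K by simp
          qed
        qed
        ultimately show "le G0 z" by simp
      qed
    qed
    have nnT0: "\<not> nested L le \<G> T0"
    proof
      assume "nested L le \<G> T0"
      then have "\<forall>A\<subseteq>T0. antichain_on le A \<longrightarrow> (\<forall>T'\<subseteq>A. finite T' \<and> 2 \<le> card T' \<longrightarrow> lub L le T' \<notin> \<G>)"
        unfolding nested_def by blast
      then have "lub L le T0 \<notin> \<G>" using T0ac finT0 cT0 by blast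
      then show False using lubT0 G0L(2) by simp
    qed
    obtain u v where uv: "u \<in> T0" "v \<in> T0" "u \<noteq> v" "lub L le {u, v} \<in> \<G>"
      using flag_pair[OF fl T0V nnT0] by blast
    have mixed: "False" if K: "K \<in> N" and b: "b \<in> B'" and W: "lub L le {g K, b} \<in> \<G>" for K b
    proof -
      have bB: "b \<in> B" using b B'_def by blast
      have gL: "g K \<in> L" using gP[OF K] by blast
      have S: "{g K, b} \<subseteq> L" using gL BL(1)[OF bB] by blast
      have WL: "lub L le {g K, b} \<in> L" using lub_in[OF S] .
      have bK: "le b K"
        using ltrans[OF BL(1)[OF bB] F'L F(1) BL(3)[OF bB] F'F] ltrans[OF BL(1)[OF bB] F(1) KL[OF K] _ KF[OF K]] by blast
      have "le (lub L le {g K, b}) K" using lub_least[OF S KL[OF K]] gP[OF K] bK by blast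
      then have "lub L le {g K, b} \<in> {G \<in> \<G>. le G K}" using W by blast
      moreover have "le (g K) (lub L le {g K, b})" using lub_upper[OF S] by blast
      ultimately have "lub L le {g K, b} = g K" using gK[OF K] unfolding maxs_def by blast
      then have "le b (g K)" using lub_upper[OF S, of b] by simp
      then show False using b K B'_def by blast
    qed
    show False
    proof (cases "u \<in> g ` N")
      case True
      then obtain K1 where K1: "K1 \<in> N" "u = g K1" by blast
      show False
      proof (cases "v \<in> g ` N")
        case True
        then obtain K2 where K2: "K2 \<in> N" "v = g K2" by blast
        have ne: "K1 \<noteq> K2" using uv K1 K2 by blast
        define W where "W = lub L le {u, v}"
        have S: "{u, v} \<subseteq> L" using gP K1 K2 by blast
        have WL: "W \<in> L" using lub_in[OF S] W_def by simp
        have uW: "le u W" "le v W" using lub_upper[OF S] W_def by auto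
        have JL: "ljoin L le F W \<in> L" using join_in[OF F(1) WL] .
        have g1L: "u \<in> L" using gP[OF K1(1)] K1(2) by blast
        have g2L: "v \<in> L" using gP[OF K2(1)] K2(2) by blast
        have e1: "ljoin L le F u = K1" using gK[OF K1(1)] K1(2) by blast
        have e2: "ljoin L le F v = K2" using gK[OF K2(1)] K2(2) by blast
        have K1J: "le K1 (ljoin L le F W)"
          using join_mono[OF F(1) g1L WL uW(1)] unfolding e1 .
        have K2J: "le K2 (ljoin L le F W)"
          using join_mono[OF F(1) g2L WL uW(2)] unfolding e2 .
        have "ljoin L le F W \<noteq> F"
        proof
          assume "ljoin L le F W = F"
          then have "le K1 F" using K1J by simp
          then have "K1 = F" using lantisym[OF KL[OF K1(1)] F(1)] KF[OF K1(1)] by blast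
          then show False using KnF[OF K1(1)] by blast
        qed
        moreover have "ljoin L le F W \<in> (\<lambda>G. ljoin L le F G) ` \<G>" using uv(4) W_def by blast
        ultimately have JGF: "ljoin L le F W \<in> ?GF" unfolding contr_G_def by blast
        have "{K1, K2} \<subseteq> ?C" using NC K1(1) K2(1) by blast
        then have "lub ?C le {K1, K2} = lub L le (insert F {K1, K2})"
          using contr_lub[OF F(1)] by blast
        also have "\<dots> = ljoin L le F W"
        proof (rule lub_eq)
          show "is_lub L le (insert F {K1, K2}) (ljoin L le F W)"
            unfolding is_lub_def
          proof (intro conjI ballI impI)
            show "ljoin L le F W \<in> L" by fact
            fix s assume "s \<in> insert F {K1, K2}"
            then show "le s (ljoin L le F W)" using join_ge1[OF F(1) WL] K1J K2J by blast
          next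
            fix w assume w: "w \<in> L" "\<forall>s\<in>insert F {K1, K2}. le s w"
            have "le u w" using ltrans[OF _ KL[OF K1(1)] w(1)] gP[OF K1(1)] K1 w(2) by blast
            moreover have "le v w" using ltrans[OF _ KL[OF K2(1)] w(1)] gP[OF K2(1)] K2 w(2) by blast
            ultimately have "le W w" using lub_least[OF S w(1)] W_def by blast
            then show "le (ljoin L le F W) w" using join_least[OF F(1) WL w(1)] w(2) by blast
          qed
        qed
        finally have "lub ?C le {K1, K2} \<in> ?GF" using JGF by simp
        then show False using pairs[OF K1(1) K2(1) ne] by blast
      next
        case False
        then have "v \<in> B'" using uv T0_def by blast
        then show False using mixed[OF K1(1)] uv K1 by blast
      qed
    next
      case False
      then have uB: "u \<in> B'" using uv T0_def by blast
      show False
      proof (cases "v \<in> g ` N")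
        case True
        then obtain K2 where K2: "K2 \<in> N" "v = g K2" by blast
        have "lub L le {g K2, u} \<in> \<G>" using uv K2 by (simp add: insert_commute)
        then show False using mixed[OF K2(1) uB] by blast
      next
        case False
        then have vB: "v \<in> B" using uv T0_def B'_def by blast
        have uB2: "u \<in> B" using uB B'_def by blast
        have S: "{u, v} \<subseteq> L" using BL uB2 vB by blast
        have WF: "le (lub L le {u, v}) F'" using lub_least[OF S F'L] BL(3) uB2 vB by blast
        then have "lub L le {u, v} \<in> {G \<in> \<G>. le G F'}" using uv(4) by blast
        moreover have "le u (lub L le {u, v})" "le v (lub L le {u, v})" using lub_upper[OF S] by auto
        ultimately have "lub L le {u, v} = u" "lub L le {u, v} = v"
          using uB2 vB unfolding B_def maxs_def by blast+
        then show False using uv(3) by simp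
      qed
    qed
  qed
qed

end

theorem proposition3p17:
  fixes L :: "'a set" and le :: "'a \<Rightarrow> 'a \<Rightarrow> bool" and \<G> :: "'a set" and F :: 'a
  assumes "built_lattice L le \<G>"
    and "flag_built L le \<G>"
    and "F \<in> L" and "F \<noteq> lbot L le" and "F \<noteq> ltop L le"
  shows "built_lattice (restr_L L le F) le (restr_G \<G> le F) \<and>
         flag_built (restr_L L le F) le (restr_G \<G> le F) \<and>
         built_lattice (contr_L L le F) le (contr_G L le \<G> F) \<and>
         flag_built (contr_L L le F) le (contr_G L le \<G> F)"
proof -
  have geoL: "geometric_lattice L le" and bsL: "building_set L le \<G>"
    using assms(1) unfolding built_lattice_def by auto
  have fL: "flat L le" using geoL unfolding geometric_lattice_def flat_def by blast
  interpret geo L le using fL geoL by (simp add: geo_def geo_axioms_def)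
  interpret bs L le \<G> using fL bsL by (simp add: bs_def bs_axioms_def)
  have 1: "built_lattice (restr_L L le F) le (restr_G \<G> le F)"
    unfolding built_lattice_def using restr_geo[OF assms(3)] restr_building[OF assms(3)] by blast
  have 2: "flag_built (restr_L L le F) le (restr_G \<G> le F)"
    using restr_flag[OF assms(3) assms(2)] .
  have 3: "built_lattice (contr_L L le F) le (contr_G L le \<G> F)"
    unfolding built_lattice_def using contr_geo[OF assms(3)] contr_building[OF assms(3) assms(4)] by blast
  have 4: "flag_built (contr_L L le F) le (contr_G L le \<G> F)"
    using contr_flag[OF assms(3) assms(4) assms(2)] .
  show ?thesis using 1 2 3 4 by blast
qed

end
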